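(* Let $q\in\mathbb C$ with $|q|>1$, let $t\ge 2$ and let $\zeta\in\mathbb C$ be a primitive $t$-th root of unity. For $g\in\mathbb C(z)$ put $\sigma_q(g)(z)=g(qz)$ and $\sigma_\zeta(g)(z)=g(\zeta z)$. Let $a\in\mathbb C(z)$, $a\neq 0$, be written as $$a=\lambda\, z^T\prod_{k=0}^{t-1}\prod_{d=-N-1}^{N}\prod_{i=1}^{R}\bigl(z-\zeta^k q^d r_i\bigr)^{s_{k,d,i}},$$ where $\lambda,r_1,\dots,r_R\in\mathbb C^*$, $T,N,s_{k,d,i}\in\mathbb Z$, and the $r_i$ are pairwise distinct modulo the subgroup $\zeta^{\mathbb Z}q^{\mathbb Z}$ of $\mathbb C^*$. Put $a_{i,k}=\sum_{d=-N-1}^{N}s_{k,d,i}$, $d_{k,i}=\sum_{j=0}^{t-1}\zeta^{kj}a_{i,j}$, and let $D$ be the $t\times R$ matrix whose entry in row $k$ ($k=0,\dots,t-1$) and column $i$ ($i=1,\dots,R$) is $d_{k,i}$; the row with $k=0$ is called the first row. For integers $n_0,\dots,n_{t-1}$ write $\varphi(x)=x^{n_0}(\sigma_\zeta x)^{n_1}\cdots(\sigma_\zeta^{t-1}x)^{n_{t-1}}$. Then: (1) If $T=0$ and either $\lambda^{\mathbb Z}\cap q^{\mathbb Z}\neq\{1\}$ or $\lambda$ is a root of unity, then there exist $0\neq b\in\mathbb C(z)$ and integers $n_0,\dots,n_{t-1}$, not all zero, with $\varphi(a)=\sigma_q(b)/b$ if and only if $D$ has a zero row. (2) If either $T\neq0$,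 or ($\lambda^{\mathbb Z}\cap q^{\mathbb Z}=\{1\}$ and $\lambda$ is not a root of unity), then there exist $0\neq b\in\mathbb C(z)$ and integers $n_0,\dots,n_{t-1}$, not all zero, with $\varphi(a)=\sigma_q(b)/b$ if and only if $D$ has a zero row other than the first row.
   Context: Here $\varphi(a)$ means $a^{n_0}\sigma_\zeta(a)^{n_1}\cdots\sigma_\zeta^{t-1}(a)^{n_{t-1}}\in\mathbb C(z)$. *)

theory Defs
  imports "HOL-Computational_Algebra.Computational_Algebra"
begin

text \<open>Rational functions C(z) are modelled as the fraction field of complex polynomials.
  The variable z is the polynomial [:0,1:].\<close>

type_synonym ratfun = "complex poly fract"

definition zvar :: ratfun where
  "zvar = to_fract [:0, 1:]"

definition const_rf :: "complex \<Rightarrow> ratfun" where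
  "const_rf c = to_fract [:c:]"

text \<open>The substitution operator g(z) \<mapsto> g(c z), computed on some representative
  g = p/r with r \<noteq> 0 (independent of the representative when c \<noteq> 0).\<close>
definition subst_scale :: "complex \<Rightarrow> ratfun \<Rightarrow> ratfun" where
  "subst_scale c g = (case (SOME (p, r). r \<noteq> 0 \<and> g = Fract p r) of (p, r) \<Rightarrow>
      Fract (pcompose p [:0, c:]) (pcompose r [:0, c:]))"

definition phi :: "complex \<Rightarrow> nat \<Rightarrow> (nat \<Rightarrow> int) \<Rightarrow> ratfun \<Rightarrow> ratfun" where
  "phi \<zeta> t n x = (\<Prod>j<t. ((subst_scale \<zeta> ^^ j) x) powi (n j))"

definition primitive_root_of_unity :: "nat \<Rightarrow> complex \<Rightarrow> bool" where
  "primitive_root_of_unity t \<zeta> \<longleftrightarrow> 0 < t \<and> \<zeta> ^ t = 1 \<and> (\<forall>m. 0 < m \<and> m < t \<longrightarrow> \<zeta> ^ m \<noteq> 1)"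

definition root_of_unity :: "complex \<Rightarrow> bool" where
  "root_of_unity x \<longleftrightarrow> (\<exists>n::nat. 0 < n \<and> x ^ n = 1)"

definition nontriv_meet :: "complex \<Rightarrow> complex \<Rightarrow> bool" where
  "nontriv_meet lam q \<longleftrightarrow> (\<exists>m n :: int. lam powi m = q powi n \<and> lam powi m \<noteq> 1)"

definition a_rf :: "complex \<Rightarrow> complex \<Rightarrow> nat \<Rightarrow> complex \<Rightarrow> int \<Rightarrow> int \<Rightarrow> nat
    \<Rightarrow> (nat \<Rightarrow> complex) \<Rightarrow> (nat \<Rightarrow> int \<Rightarrow> nat \<Rightarrow> int) \<Rightarrow> ratfun" where
  "a_rf q \<zeta> t lam T N R r s = const_rf lam * zvar powi T *
     (\<Prod>k<t. \<Prod>d\<in>{-N-1..N}. \<Prod>i\<in>{1..R}.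
        (zvar - const_rf (\<zeta> ^ k * q powi d * r i)) powi (s k d i))"

definition aik :: "int \<Rightarrow> (nat \<Rightarrow> int \<Rightarrow> nat \<Rightarrow> int) \<Rightarrow> nat \<Rightarrow> nat \<Rightarrow> int" where
  "aik N s i k = (\<Sum>d\<in>{-N-1..N}. s k d i)"

definition Dmat :: "complex \<Rightarrow> nat \<Rightarrow> int \<Rightarrow> (nat \<Rightarrow> int \<Rightarrow> nat \<Rightarrow> int) \<Rightarrow> nat \<Rightarrow> nat \<Rightarrow> complex" where
  "Dmat \<zeta> t N s k i = (\<Sum>j<t. \<zeta> ^ (k * j) * of_int (aik N s i j))"

definition has_solution :: "complex \<Rightarrow> complex \<Rightarrow> nat \<Rightarrow> ratfun \<Rightarrow> bool" where
  "has_solution q \<zeta> t a \<longleftrightarrow> (\<exists>b n. b \<noteq> 0 \<and> (\<exists>j<t. n j \<noteq> 0) \<and>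
      phi \<zeta> t n a = subst_scale q b / b)"

end

theory Submission
  imports Defs
begin
lemma hom_powi:
  fixes f :: "'a::field \<Rightarrow> 'b::field"
  assumes "f 1 = 1" "\<And>x y. f (x*y) = f x * f y" "\<And>x. f (inverse x) = inverse (f x)"
  shows "f (x powi n) = f x powi n"
proof -
  have p: "f (y ^ m) = f y ^ m" for y m by (induct m) (auto simp: assms)
  show ?thesis unfolding power_int_def by (auto simp: p assms)
qed

lemma lin_poly_deg: "(c::complex) \<noteq> 0 \<Longrightarrow> degree [:0, c:] = 1" by simp

lemma lc_pcomp: "(c::complex) \<noteq> 0 \<Longrightarrow> lead_coeff (pcompose r [:0,c:]) = lead_coeff r * c ^ degree r"
  by (subst lead_coeff_comp) auto

lemma deg_pcomp: "(c::complex) \<noteq> 0 \<Longrightarrow> degree (pcompose r [:0,c:]) = degree r"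
  by (simp add: degree_pcompose)

lemma pcomp_nz: "(c::complex) \<noteq> 0 \<Longrightarrow> r \<noteq> 0 \<Longrightarrow> pcompose r [:0,c:] \<noteq> 0"
  using lc_pcomp[of c r] by auto

lemma ss_Fract:
  assumes c: "c \<noteq> 0" and r: "r \<noteq> 0"
  shows "subst_scale c (Fract p r) = Fract (pcompose p [:0,c:]) (pcompose r [:0,c:])"
proof -
  define pr where "pr = (SOME (p', r'). r' \<noteq> 0 \<and> Fract p r = Fract p' r')"
  have ex: "\<exists>x. (case x of (p', r') \<Rightarrow> r' \<noteq> 0 \<and> Fract p r = Fract p' r')"
    using r by auto
  have "case pr of (p', r') \<Rightarrow> r' \<noteq> 0 \<and> Fract p r = Fract p' r'"
    unfolding pr_def by (rule someI_ex[OF ex])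
  then obtain p' r' where pr: "pr = (p', r')" "r' \<noteq> 0" "Fract p r = Fract p' r'"
    by (cases pr) auto
  have e: "p * r' = p' * r" using pr r by (simp add: eq_fract)
  have "subst_scale c (Fract p r) = (case pr of (p, r) \<Rightarrow>
      Fract (pcompose p [:0, c:]) (pcompose r [:0, c:]))"
    unfolding subst_scale_def pr_def by (rule refl)
  also have "\<dots> = Fract (pcompose p' [:0,c:]) (pcompose r' [:0,c:])"
    using pr(1) by simp
  also have "\<dots> = Fract (pcompose p [:0,c:]) (pcompose r [:0,c:])"
    using pcomp_nz[OF c r] pcomp_nz[OF c pr(2)]
    by (simp add: eq_fract pcompose_mult[symmetric] e)
  finally show ?thesis .
qed

lemma pcompose_one: "pcompose 1 q = 1"
  by (metis one_pCons pcompose_const)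

lemma ss_to_fract: "c \<noteq> 0 \<Longrightarrow> subst_scale c (to_fract p) = to_fract (pcompose p [:0,c:])"
  unfolding to_fract_def by (simp add: ss_Fract pcompose_one)

lemma ss_mult: "c \<noteq> 0 \<Longrightarrow> subst_scale c (g * h) = subst_scale c g * subst_scale c h"
  by (cases g, cases h) (simp add: ss_Fract pcomp_nz pcompose_mult)

lemma ss_zero: "c \<noteq> 0 \<Longrightarrow> subst_scale c 0 = 0"
  using ss_to_fract[of c 0] by simp

lemma ss_one: "c \<noteq> 0 \<Longrightarrow> subst_scale c 1 = 1"
  using ss_to_fract[of c 1] by (simp add: pcompose_one)

lemma ss_inverse: assumes c: "c \<noteq> 0" shows "subst_scale c (inverse g) = inverse (subst_scale c g)"
proof (cases g)
  case (Fract a b)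
  show ?thesis
  proof (cases "a = 0")
    case True then show ?thesis using Fract c by (simp add: ss_zero fract_collapse)
  next
    case False then show ?thesis using Fract c by (simp add: ss_Fract pcomp_nz)
  qed
qed

lemma ss_powi: "c \<noteq> 0 \<Longrightarrow> subst_scale c (g powi n) = subst_scale c g powi n"
  by (rule hom_powi) (auto simp: ss_one ss_mult ss_inverse)

lemma ss_divide: "c \<noteq> 0 \<Longrightarrow> subst_scale c (g / h) = subst_scale c g / subst_scale c h"
  by (simp add: divide_inverse ss_mult ss_inverse)

lemma ss_nz: assumes "c \<noteq> 0" "g \<noteq> 0" shows "subst_scale c g \<noteq> 0"
proof
  assume "subst_scale c g = 0"
  then have "subst_scale c (g * inverse g) = 0" using \<open>c\<noteq>0\<close> by (simp add: ss_mult)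
  then show False using \<open>c\<noteq>0\<close> \<open>g\<noteq>0\<close> by (simp add: ss_one)
qed

lemma ss_prod: "c \<noteq> 0 \<Longrightarrow> subst_scale c (\<Prod>x\<in>A. f x) = (\<Prod>x\<in>A. subst_scale c (f x))"
  by (induct A rule: infinite_finite_induct) (auto simp: ss_one ss_mult)

lemma ss_iter_nz: "c \<noteq> 0 \<Longrightarrow> g \<noteq> 0 \<Longrightarrow> (subst_scale c ^^ j) g \<noteq> 0"
  by (induct j) (auto simp: ss_nz)

lemma add_hom_powi:
  fixes f :: "'a::field \<Rightarrow> int"
  assumes m: "\<And>x y. x\<noteq>0 \<Longrightarrow> y\<noteq>0 \<Longrightarrow> f (x*y) = f x + f y"
    and i: "\<And>x. x \<noteq> 0 \<Longrightarrow> f (inverse x) = - f x" and x: "x \<noteq> 0"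
  shows "f (x powi n) = n * f x"
proof -
  have f1: "f 1 = 0" using m[of 1 1] by simp
  have p: "y \<noteq> 0 \<Longrightarrow> f (y ^ k) = int k * f y" for y k
    by (induct k) (auto simp: f1 m algebra_simps)
  show ?thesis unfolding power_int_def using x by (auto simp: p i)
qed

lemma add_hom_prod:
  fixes f :: "'a::field \<Rightarrow> int"
  assumes m: "\<And>x y. x\<noteq>0 \<Longrightarrow> y\<noteq>0 \<Longrightarrow> f (x*y) = f x + f y"
    and nz: "\<And>x. x \<in> A \<Longrightarrow> g x \<noteq> 0"
  shows "f (\<Prod>x\<in>A. g x) = (\<Sum>x\<in>A. f (g x))"
proof -
  have f1: "f 1 = 0" using m[of 1 1] by simp
  show ?thesis using nz
    by (induct A rule: infinite_finite_induct) (auto simp: f1 m)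
qed

lemma mult_hom_powi:
  fixes f :: "'a::field \<Rightarrow> 'b::field"
  assumes m: "\<And>x y. x\<noteq>0 \<Longrightarrow> y\<noteq>0 \<Longrightarrow> f (x*y) = f x * f y"
    and i: "\<And>x. x \<noteq> 0 \<Longrightarrow> f (inverse x) = inverse (f x)" and x: "x \<noteq> 0"
    and f1: "f 1 = 1"
  shows "f (x powi n) = f x powi n"
proof -
  have p: "y \<noteq> 0 \<Longrightarrow> f (y ^ k) = f y ^ k" for y k
    by (induct k) (auto simp: f1 m algebra_simps)
  show ?thesis unfolding power_int_def using x by (auto simp: p i)
qed

lemma mult_hom_prod:
  fixes f :: "'a::field \<Rightarrow> 'b::field"
  assumes m: "\<And>x y. x\<noteq>0 \<Longrightarrow> y\<noteq>0 \<Longrightarrow> f (x*y) = f x * f y"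
    and nz: "\<And>x. x \<in> A \<Longrightarrow> g x \<noteq> 0" and f1: "f 1 = 1"
  shows "f (\<Prod>x\<in>A. g x) = (\<Prod>x\<in>A. f (g x))"
  using nz by (induct A rule: infinite_finite_induct) (auto simp: f1 m)

section \<open>Valuations on polynomials\<close>

definition vO :: "complex set \<Rightarrow> complex poly \<Rightarrow> int" where
  "vO S p = (\<Sum>\<gamma>\<in>{\<gamma>\<in>S. poly p \<gamma> = 0}. int (order \<gamma> p))"

lemma vO_superset:
  assumes p: "p \<noteq> 0" and F: "finite F" "{\<gamma>. poly p \<gamma> = 0} \<subseteq> F"
  shows "vO S p = (\<Sum>\<gamma>\<in>F\<inter>S. int (order \<gamma> p))"
  unfolding vO_def
  by (rule sum.mono_neutral_left) (use F p in \<open>auto simp: order_0I\<close>)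

lemma vO_mult:
  assumes p: "p \<noteq> 0" and r: "r \<noteq> 0"
  shows "vO S (p * r) = vO S p + vO S r"
proof -
  define F where "F = {\<gamma>. poly (p*r) \<gamma> = 0}"
  have pr: "p * r \<noteq> 0" using p r by simp
  have fF: "finite F" unfolding F_def using poly_roots_finite[OF pr] .
  have "vO S (p*r) = (\<Sum>\<gamma>\<in>F\<inter>S. int (order \<gamma> (p*r)))"
    by (rule vO_superset[OF pr fF]) (auto simp: F_def)
  also have "\<dots> = (\<Sum>\<gamma>\<in>F\<inter>S. int (order \<gamma> p)) + (\<Sum>\<gamma>\<in>F\<inter>S. int (order \<gamma> r))"
    by (simp add: order_mult[OF pr] sum.distrib)
  also have "(\<Sum>\<gamma>\<in>F\<inter>S. int (order \<gamma> p)) = vO S p"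
    by (rule vO_superset[symmetric, OF p fF]) (auto simp: F_def)
  also have "(\<Sum>\<gamma>\<in>F\<inter>S. int (order \<gamma> r)) = vO S r"
    by (rule vO_superset[symmetric, OF r fF]) (auto simp: F_def)
  finally show ?thesis .
qed

lemma vO_const: "c \<noteq> 0 \<Longrightarrow> vO S [:c:] = 0"
  unfolding vO_def by simp

lemma vO_one: "vO S 1 = 0"
  using vO_const[of 1 S] by (simp add: one_pCons)

lemma order_lin: "order \<beta> [:-\<beta>, 1:] = (1::nat)"
  using order_power_n_n[of \<beta> 1] by simp

lemma vO_lin: "vO S [:-\<beta>, 1:] = (if \<beta> \<in> S then 1 else 0)"
proof -
  have "{\<gamma>\<in>S. poly [:-\<beta>, 1:] \<gamma> = 0} = (if \<beta> \<in> S then {\<beta>} else {})" by auto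
  then show ?thesis unfolding vO_def by (simp add: order_lin)
qed

lemma pcompose_power_left: "pcompose (p ^ n) q = (pcompose p q) ^ n"
  by (induct n) (simp_all add: pcompose_mult pcompose_one)

lemma order_pcomp:
  assumes c: "(c::complex) \<noteq> 0" and p: "p \<noteq> 0"
  shows "order \<gamma> (pcompose p [:0,c:]) = order (c*\<gamma>) p"
proof -
  obtain r where r: "p = [:-(c*\<gamma>), 1:] ^ order (c*\<gamma>) p * r" "\<not> [:-(c*\<gamma>), 1:] dvd r"
    using order_decomp[OF p] by blast
  define m where "m = order (c*\<gamma>) p"
  have rnz: "r \<noteq> 0" using r(2) by auto
  have r\<gamma>: "poly r (c*\<gamma>) \<noteq> 0" using r(2) by (simp add: poly_eq_0_iff_dvd)
  have lin: "pcompose [:-(c*\<gamma>), 1:] [:0,c:] = smult c [:-\<gamma>, 1:]"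
    by (simp add: pcompose_pCons algebra_simps)
  have "pcompose p [:0,c:] = (pcompose [:-(c*\<gamma>), 1:] [:0,c:]) ^ m * pcompose r [:0,c:]"
    apply (subst r(1)) unfolding m_def[symmetric]
    by (simp only: pcompose_mult pcompose_power_left)
  also have "\<dots> = smult (c^m) ([:-\<gamma>, 1:] ^ m * pcompose r [:0,c:])"
    by (simp only: lin smult_power mult_smult_left)
  also have "order \<gamma> \<dots> = order \<gamma> ([:-\<gamma>, 1:] ^ m) + order \<gamma> (pcompose r [:0,c:])"
    using c pcomp_nz[OF c rnz] by (simp add: order_smult order_mult)
  also have "order \<gamma> (pcompose r [:0,c:]) = 0"
    by (rule order_0I) (use r\<gamma> in \<open>simp add: poly_pcompose mult.commute\<close>)
  finally show ?thesis by (simp add: order_power_n_n m_def)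
qed

lemma vO_pcomp:
  assumes c: "(c::complex) \<noteq> 0" and p: "p \<noteq> 0"
  shows "vO S (pcompose p [:0,c:]) = vO ((\<lambda>x. c * x) ` S) p"
proof -
  have "vO S (pcompose p [:0,c:]) = (\<Sum>\<gamma>\<in>{\<gamma>\<in>S. poly p (c*\<gamma>) = 0}. int (order (c*\<gamma>) p))"
    unfolding vO_def by (simp add: order_pcomp[OF c p] poly_pcompose mult.commute)
  also have "\<dots> = (\<Sum>\<delta>\<in>(\<lambda>x. c*x) ` {\<gamma>\<in>S. poly p (c*\<gamma>) = 0}. int (order \<delta> p))"
    by (rule sum.reindex[symmetric, unfolded comp_def]) (use c in \<open>auto simp: inj_on_def\<close>)
  also have "(\<lambda>x. c*x) ` {\<gamma>\<in>S. poly p (c*\<gamma>) = 0} = {\<delta>\<in>(\<lambda>x. c * x) ` S. poly p \<delta> = 0}"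
    by auto
  finally show ?thesis unfolding vO_def .
qed

definition rep :: "ratfun \<Rightarrow> complex poly \<times> complex poly" where
  "rep g = (SOME (p, r). r \<noteq> 0 \<and> g = Fract p r)"

lemma rep_prop: "case rep g of (p, r) \<Rightarrow> r \<noteq> 0 \<and> g = Fract p r"
proof -
  obtain p r where "g = Fract p r" "r \<noteq> 0" by (cases g) auto
  then have ex: "\<exists>x. case x of (p, r) \<Rightarrow> r \<noteq> 0 \<and> g = Fract p r" by auto
  show ?thesis unfolding rep_def by (rule someI_ex[OF ex])
qed

definition vF :: "complex set \<Rightarrow> ratfun \<Rightarrow> int" where
  "vF S g = (case rep g of (p, r) \<Rightarrow> vO S p - vO S r)"
definition lcF :: "ratfun \<Rightarrow> complex" where
  "lcF g = (case rep g of (p, r) \<Rightarrow> lead_coeff p / lead_coeff r)"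
definition degF :: "ratfun \<Rightarrow> int" where
  "degF g = (case rep g of (p, r) \<Rightarrow> int (degree p) - int (degree r))"

lemma rep_cases:
  assumes "p \<noteq> 0" "r \<noteq> 0"
  obtains p' r' where "rep (Fract p r) = (p', r')" "p' \<noteq> 0" "r' \<noteq> 0" "p * r' = p' * r"
proof -
  obtain p' r' where e: "rep (Fract p r) = (p', r')" by (cases "rep (Fract p r)")
  with rep_prop[of "Fract p r"] have r': "r' \<noteq> 0" "Fract p r = Fract p' r'" by auto
  then have pr: "p * r' = p' * r" using assms by (simp add: eq_fract)
  then have "p' \<noteq> 0" using assms r' by auto
  with e r' pr that show ?thesis by blast
qed

lemma vF_Fract: "p \<noteq> 0 \<Longrightarrow> r \<noteq> 0 \<Longrightarrow> vF S (Fract p r) = vO S p - vO S r"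
proof -
  assume a: "p \<noteq> 0" "r \<noteq> 0"
  obtain p' r' where e: "rep (Fract p r) = (p', r')" "p' \<noteq> 0" "r' \<noteq> 0" "p * r' = p' * r"
    using rep_cases[OF a] by blast
  have "vO S p + vO S r' = vO S p' + vO S r"
    using arg_cong[OF e(4), of "vO S"] vO_mult[of p r' S] vO_mult[of p' r S] a e(2,3) by simp
  then show ?thesis unfolding vF_def e by simp
qed

lemma lcF_Fract: "p \<noteq> 0 \<Longrightarrow> r \<noteq> 0 \<Longrightarrow> lcF (Fract p r) = lead_coeff p / lead_coeff r"
proof -
  assume a: "p \<noteq> 0" "r \<noteq> 0"
  obtain p' r' where e: "rep (Fract p r) = (p', r')" "p' \<noteq> 0" "r' \<noteq> 0" "p * r' = p' * r"
    using rep_cases[OF a] by blast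
  have "lead_coeff p * lead_coeff r' = lead_coeff p' * lead_coeff r"
    using arg_cong[OF e(4), of lead_coeff] by (simp add: lead_coeff_mult)
  then show ?thesis unfolding lcF_def e using a e by (simp add: field_simps)
qed

lemma degF_Fract: "p \<noteq> 0 \<Longrightarrow> r \<noteq> 0 \<Longrightarrow> degF (Fract p r) = int (degree p) - int (degree r)"
proof -
  assume a: "p \<noteq> 0" "r \<noteq> 0"
  obtain p' r' where e: "rep (Fract p r) = (p', r')" "p' \<noteq> 0" "r' \<noteq> 0" "p * r' = p' * r"
    using rep_cases[OF a] by blast
  have "degree p + degree r' = degree p' + degree r"
    using arg_cong[OF e(4), of degree] degree_mult_eq[of p r'] degree_mult_eq[of p' r] a e(2,3) by simp
  then show ?thesis unfolding degF_def e by simp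
qed

lemma fract_nz_cases:
  assumes "g \<noteq> (0::ratfun)"
  obtains p r where "g = Fract p r" "p \<noteq> 0" "r \<noteq> 0"
  using assms by (cases g rule: Fract_cases_nonzero) auto

lemma vF_mult: "g \<noteq> 0 \<Longrightarrow> h \<noteq> 0 \<Longrightarrow> vF S (g * h) = vF S g + vF S h"
  by (elim fract_nz_cases) (simp add: vF_Fract vO_mult)

lemma vF_inverse: "g \<noteq> 0 \<Longrightarrow> vF S (inverse g) = - vF S g"
  by (elim fract_nz_cases) (simp add: vF_Fract)

lemma vF_powi: "g \<noteq> 0 \<Longrightarrow> vF S (g powi n) = n * vF S g"
  by (rule add_hom_powi) (auto simp: vF_mult vF_inverse)

lemma vF_prod: "(\<And>x. x \<in> A \<Longrightarrow> f x \<noteq> 0) \<Longrightarrow> vF S (\<Prod>x\<in>A. f x) = (\<Sum>x\<in>A. vF S (f x))"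
  by (rule add_hom_prod) (auto simp: vF_mult)

lemma vF_divide: "g \<noteq> 0 \<Longrightarrow> h \<noteq> 0 \<Longrightarrow> vF S (g / h) = vF S g - vF S h"
  by (simp add: divide_inverse vF_mult vF_inverse)

lemma lcF_mult: "g \<noteq> 0 \<Longrightarrow> h \<noteq> 0 \<Longrightarrow> lcF (g * h) = lcF g * lcF h"
  by (elim fract_nz_cases) (simp add: lcF_Fract lead_coeff_mult)

lemma lcF_inverse: "g \<noteq> 0 \<Longrightarrow> lcF (inverse g) = inverse (lcF g)"
  by (elim fract_nz_cases) (simp add: lcF_Fract)

lemma lcF_one: "lcF 1 = 1"
  using lcF_Fract[of 1 1] by (simp add: fract_collapse)

lemma lcF_nz: "g \<noteq> 0 \<Longrightarrow> lcF g \<noteq> 0"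
  by (elim fract_nz_cases) (simp add: lcF_Fract)

lemma lcF_powi: "g \<noteq> 0 \<Longrightarrow> lcF (g powi n) = lcF g powi n"
  by (rule mult_hom_powi) (auto simp: lcF_mult lcF_inverse lcF_one)

lemma lcF_prod: "(\<And>x. x \<in> A \<Longrightarrow> f x \<noteq> 0) \<Longrightarrow> lcF (\<Prod>x\<in>A. f x) = (\<Prod>x\<in>A. lcF (f x))"
  by (rule mult_hom_prod) (auto simp: lcF_mult lcF_one)

lemma lcF_divide: "g \<noteq> 0 \<Longrightarrow> h \<noteq> 0 \<Longrightarrow> lcF (g / h) = lcF g / lcF h"
  by (simp add: divide_inverse lcF_mult lcF_inverse)

lemma degF_mult: "g \<noteq> 0 \<Longrightarrow> h \<noteq> 0 \<Longrightarrow> degF (g * h) = degF g + degF h"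
  by (elim fract_nz_cases) (simp add: degF_Fract degree_mult_eq)

lemma degF_inverse: "g \<noteq> 0 \<Longrightarrow> degF (inverse g) = - degF g"
  by (elim fract_nz_cases) (simp add: degF_Fract)

lemma degF_powi: "g \<noteq> 0 \<Longrightarrow> degF (g powi n) = n * degF g"
  by (rule add_hom_powi) (auto simp: degF_mult degF_inverse)

lemma degF_prod: "(\<And>x. x \<in> A \<Longrightarrow> f x \<noteq> 0) \<Longrightarrow> degF (\<Prod>x\<in>A. f x) = (\<Sum>x\<in>A. degF (f x))"
  by (rule add_hom_prod) (auto simp: degF_mult)

lemma vF_ss: "c \<noteq> 0 \<Longrightarrow> g \<noteq> 0 \<Longrightarrow> vF S (subst_scale c g) = vF ((\<lambda>x. c * x) ` S) g"
  by (elim fract_nz_cases) (simp add: ss_Fract vF_Fract pcomp_nz vO_pcomp)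

lemma lcF_ss: "c \<noteq> 0 \<Longrightarrow> g \<noteq> 0 \<Longrightarrow> lcF (subst_scale c g) = c powi degF g * lcF g"
proof (elim fract_nz_cases)
  fix p r assume a: "c \<noteq> 0" "g = Fract p r" "p \<noteq> 0" "r \<noteq> 0"
  have "c powi (int (degree p) - int (degree r)) = c ^ degree p / c ^ degree r"
    using a by (simp add: power_int_diff)
  then show "lcF (subst_scale c g) = c powi degF g * lcF g"
    using a by (simp add: ss_Fract lcF_Fract pcomp_nz lc_pcomp degF_Fract field_simps)
qed

lemma degF_ss: "c \<noteq> 0 \<Longrightarrow> g \<noteq> 0 \<Longrightarrow> degF (subst_scale c g) = degF g"
  by (elim fract_nz_cases) (simp add: ss_Fract degF_Fract pcomp_nz deg_pcomp)

lemma to_fract_Fract: "to_fract p = Fract p 1" by (simp add: to_fract_def)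

lemma zvar_nz: "zvar \<noteq> 0" by (simp add: zvar_def)
lemma const_nz: "c \<noteq> 0 \<Longrightarrow> const_rf c \<noteq> 0" by (simp add: const_rf_def)
lemma lin_eq: "zvar - const_rf \<beta> = to_fract [:-\<beta>, 1:]"
  by (simp add: zvar_def const_rf_def to_fract_diff[symmetric])
lemma lin_nz: "zvar - const_rf \<beta> \<noteq> 0" by (simp add: lin_eq)

lemma vF_to_fract: "p \<noteq> 0 \<Longrightarrow> vF S (to_fract p) = vO S p"
  by (simp add: to_fract_Fract vF_Fract vO_one)
lemma lcF_to_fract: "p \<noteq> 0 \<Longrightarrow> lcF (to_fract p) = lead_coeff p"
  by (simp add: to_fract_Fract lcF_Fract)
lemma degF_to_fract: "p \<noteq> 0 \<Longrightarrow> degF (to_fract p) = degree p"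
  by (simp add: to_fract_Fract degF_Fract)

lemma vF_zvar: "vF S zvar = (if 0 \<in> S then 1 else 0)"
  using vO_lin[of S 0] by (simp add: zvar_def vF_to_fract)
lemma vF_const: "c \<noteq> 0 \<Longrightarrow> vF S (const_rf c) = 0"
  by (simp add: const_rf_def vF_to_fract vO_const)
lemma vF_lin: "vF S (zvar - const_rf \<beta>) = (if \<beta> \<in> S then 1 else 0)"
  by (simp add: lin_eq vF_to_fract vO_lin)
lemma lcF_zvar: "lcF zvar = 1" by (simp add: zvar_def lcF_to_fract)
lemma lcF_const: "c \<noteq> 0 \<Longrightarrow> lcF (const_rf c) = c" by (simp add: const_rf_def lcF_to_fract)
lemma lcF_lin: "lcF (zvar - const_rf \<beta>) = 1" by (simp add: lin_eq lcF_to_fract)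
lemma degF_zvar: "degF zvar = 1" by (simp add: zvar_def degF_to_fract)
lemma degF_const: "c \<noteq> 0 \<Longrightarrow> degF (const_rf c) = 0" by (simp add: const_rf_def degF_to_fract)
lemma degF_lin: "degF (zvar - const_rf \<beta>) = 1" by (simp add: lin_eq degF_to_fract)

definition orb :: "complex \<Rightarrow> complex \<Rightarrow> complex set" where
  "orb q \<gamma> = range (\<lambda>d::int. q powi d * \<gamma>)"

definition Hs :: "complex \<Rightarrow> ratfun \<Rightarrow> bool" where
  "Hs q h \<longleftrightarrow> (\<exists>b. b \<noteq> 0 \<and> h = subst_scale q b / b)"

lemma orb_self: "\<gamma> \<in> orb q \<gamma>"
  unfolding orb_def by (rule range_eqI[of _ _ 0]) simp

lemma orb_scale: assumes "q \<noteq> 0" shows "(\<lambda>x. q * x) ` orb q \<gamma> = orb q \<gamma>"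
proof -
  have "(\<lambda>x. q * x) ` orb q \<gamma> = range (\<lambda>d::int. q powi (d+1) * \<gamma>)"
    unfolding orb_def image_image using assms by (simp add: power_int_add mult_ac)
  also have "\<dots> = orb q \<gamma>" unfolding orb_def
  proof
    show "range (\<lambda>d. q powi (d+1)*\<gamma>) \<subseteq> range (\<lambda>d. q powi d * \<gamma>)" by auto
    show "range (\<lambda>d. q powi d * \<gamma>) \<subseteq> range (\<lambda>d. q powi (d+1)*\<gamma>)"
    proof
      fix x assume "x \<in> range (\<lambda>d. q powi d * \<gamma>)"
      then obtain d where "x = q powi d * \<gamma>" by auto
      then show "x \<in> range (\<lambda>d. q powi (d+1)*\<gamma>)" by (intro range_eqI[of _ _ "d-1"]) simp
    qed
  qed
  finally show ?thesis .
qed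

lemma orb_mem_shift:
  assumes "q \<noteq> 0"
  shows "q powi d * \<gamma> \<in> orb q \<delta> \<longleftrightarrow> \<gamma> \<in> orb q \<delta>"
proof
  assume "q powi d * \<gamma> \<in> orb q \<delta>"
  then obtain e where "q powi d * \<gamma> = q powi e * \<delta>" unfolding orb_def by auto
  then have "\<gamma> = q powi (e - d) * \<delta>" using assms by (simp add: power_int_diff field_simps)
  then show "\<gamma> \<in> orb q \<delta>" unfolding orb_def by auto
next
  assume "\<gamma> \<in> orb q \<delta>"
  then obtain e where "\<gamma> = q powi e * \<delta>" unfolding orb_def by auto
  then have "q powi d * \<gamma> = q powi (d + e) * \<delta>" using assms by (simp add: power_int_add)
  then show "q powi d * \<gamma> \<in> orb q \<delta>" unfolding orb_def by auto
qed

lemma Hs_necessary: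
  assumes q: "q \<noteq> 0" and H: "Hs q h"
  shows "vF (orb q \<gamma>) h = 0" "\<exists>N. lcF h = q powi N"
proof -
  obtain b where b: "b \<noteq> 0" "h = subst_scale q b / b" using H unfolding Hs_def by auto
  show "vF (orb q \<gamma>) h = 0"
    using b q by (simp add: vF_divide ss_nz vF_ss orb_scale)
  show "\<exists>N. lcF h = q powi N"
    using b q by (auto simp: lcF_divide ss_nz lcF_ss lcF_nz)
qed

lemma const_mult: "const_rf (a * b) = const_rf a * const_rf b"
  by (simp add: const_rf_def to_fract_mult[symmetric])
lemma const_one: "const_rf 1 = 1"
  by (simp add: const_rf_def one_pCons[symmetric])
lemma const_inverse: "const_rf (inverse a) = inverse (const_rf a)"
  by (cases "a = 0") (simp_all add: const_rf_def to_fract_def eq_fract one_pCons[symmetric] fract_collapse)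
lemma const_powi: "const_rf (a powi n) = const_rf a powi n"
  by (rule hom_powi) (auto simp: const_mult const_one const_inverse)
lemma const_divide: "const_rf (a / b) = const_rf a / const_rf b"
  by (simp add: divide_inverse const_mult const_inverse)

lemma Hs_one: "q \<noteq> 0 \<Longrightarrow> Hs q 1"
  unfolding Hs_def by (rule exI[of _ 1]) (simp add: ss_one)

lemma Hs_mult: assumes q: "q \<noteq> 0" and "Hs q g" "Hs q h" shows "Hs q (g * h)"
proof -
  obtain b1 b2 where "b1 \<noteq> 0" "g = subst_scale q b1 / b1" "b2 \<noteq> 0" "h = subst_scale q b2 / b2"
    using assms unfolding Hs_def by auto
  then show ?thesis unfolding Hs_def using q by (intro exI[of _ "b1 * b2"]) (simp add: ss_mult)
qed

lemma Hs_inverse: assumes q: "q \<noteq> 0" and "Hs q g" shows "Hs q (inverse g)"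
proof -
  obtain b1 where b1: "b1 \<noteq> 0" "g = subst_scale q b1 / b1"
    using assms unfolding Hs_def by auto
  have "subst_scale q b1 \<noteq> 0" using ss_nz[OF q b1(1)] .
  then have "inverse g = subst_scale q (inverse b1) / inverse b1"
    unfolding b1(2) ss_inverse[OF q] using b1(1) by (simp add: divide_inverse mult.commute)
  then show ?thesis unfolding Hs_def using b1 by (intro exI[of _ "inverse b1"]) simp
qed

lemma Hs_divide: "q \<noteq> 0 \<Longrightarrow> Hs q g \<Longrightarrow> Hs q h \<Longrightarrow> Hs q (g / h)"
  by (simp add: divide_inverse Hs_mult Hs_inverse)

lemma Hs_q: assumes q: "q \<noteq> 0" shows "Hs q (const_rf q)"
proof -
  have "subst_scale q zvar = const_rf q * zvar"
    using q by (simp add: zvar_def ss_to_fract const_rf_def to_fract_mult[symmetric] pcompose_pCons)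
  then show ?thesis unfolding Hs_def using q zvar_nz by (intro exI[of _ zvar]) simp
qed

lemma Hs_powi_gen: assumes q: "q \<noteq> 0" and H: "Hs q g" shows "Hs q (g powi n)"
proof -
  have pw: "Hs q (g ^ m)" for m by (induct m) (auto simp: Hs_one Hs_mult q H)
  have "Hs q (inverse (g ^ m))" for m using pw Hs_inverse[OF q] by auto
  then have "Hs q (inverse g ^ m)" for m by (simp add: power_inverse)
  then show ?thesis unfolding power_int_def using pw by auto
qed

lemma Hs_qpow: "q \<noteq> 0 \<Longrightarrow> Hs q (const_rf (q powi N))"
  by (simp add: const_powi Hs_powi_gen Hs_q)

abbreviation lin :: "complex \<Rightarrow> ratfun" where "lin \<beta> \<equiv> zvar - const_rf \<beta>"

lemma inv_cancel_gen: "c \<noteq> 0 \<Longrightarrow> inverse c * (c * x / y) = (x / y :: 'a::field)"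
  by (simp add: field_simps)

lemma Hs_lin1: assumes q: "q \<noteq> 0" shows "Hs q (lin \<gamma> / lin (q * \<gamma>))"
proof -
  have "subst_scale q (lin (q*\<gamma>)) = const_rf q * lin \<gamma>"
    unfolding lin_eq using q by (simp add: ss_to_fract const_rf_def to_fract_mult[symmetric] pcompose_pCons)
  then have "Hs q (const_rf q * lin \<gamma> / lin (q*\<gamma>))"
    unfolding Hs_def using lin_nz by (intro exI[of _ "lin (q*\<gamma>)"]) simp
  then have "Hs q (inverse (const_rf q) * (const_rf q * lin \<gamma> / lin (q*\<gamma>)))"
    by (intro Hs_mult Hs_inverse Hs_q q)
  then show ?thesis by (simp only: inv_cancel_gen[OF const_nz[OF q]])
qed

lemma Hs_lin: assumes q: "q \<noteq> 0" shows "Hs q (lin \<gamma> / lin (q powi d * \<gamma>))"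
proof (induct d rule: int_induct[where k=0])
  case base then show ?case using lin_nz by (simp add: Hs_one q)
next
  case (step1 i)
  have "Hs q (lin \<gamma> / lin (q powi i * \<gamma>) * (lin (q powi i * \<gamma>) / lin (q * (q powi i * \<gamma>))))"
    by (intro Hs_mult q step1(2) Hs_lin1)
  then show ?case using lin_nz q by (simp add: power_int_add mult_ac)
next
  case (step2 i)
  have e: "q * (q powi (i - 1) * \<gamma>) = q powi i * \<gamma>"
    using q by (simp add: power_int_diff field_simps)
  have "Hs q (lin \<gamma> / lin (q powi i * \<gamma>) * inverse (lin (q powi (i - 1) * \<gamma>) / lin (q * (q powi (i-1) * \<gamma>))))"
    by (intro Hs_mult q step2(2) Hs_lin1 Hs_inverse)
  then show ?case unfolding e using lin_nz by simp
qed

lemma vO_pos: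
  assumes "p \<noteq> 0" "poly p \<gamma> = 0" "\<gamma> \<in> S"
  shows "vO S p > 0"
proof -
  have fin: "finite {\<gamma>\<in>S. poly p \<gamma> = 0}"
    using poly_roots_finite[OF assms(1)] by (rule finite_subset[rotated]) auto
  have "int (order \<gamma> p) \<le> vO S p" unfolding vO_def
    by (rule member_le_sum[OF _ _ fin, of \<gamma> "\<lambda>x. int (order x p)"]) (use assms in auto)
  moreover have "order \<gamma> p > 0" using assms by (simp add: order_gt_0_iff)
  ultimately show ?thesis by linarith
qed

lemma vO_root: assumes "vO S p \<noteq> 0" shows "\<exists>\<gamma>\<in>S. poly p \<gamma> = 0"
proof (rule ccontr)
  assume "\<not> (\<exists>\<gamma>\<in>S. poly p \<gamma> = 0)"
  then have e: "{\<gamma>\<in>S. poly p \<gamma> = 0} = {}" by auto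
  show False using assms unfolding vO_def e by simp
qed

lemma no_root_const:
  assumes "\<forall>\<gamma>. poly (p::complex poly) \<gamma> \<noteq> 0"
  obtains a where "a \<noteq> 0" "p = [:a:]"
  using fundamental_theorem_of_algebra_alt[of p] assms by auto

lemma lin_quot: "lin \<gamma> / lin \<gamma>' = Fract [:-\<gamma>, 1:] [:-\<gamma>', 1:]"
  by (simp add: lin_eq to_fract_def)

lemma vF_linq: "vF S (lin \<gamma> / lin \<gamma>') = (if \<gamma> \<in> S then 1 else 0) - (if \<gamma>' \<in> S then 1 else 0)"
  using lin_nz by (simp add: vF_divide vF_lin)

lemma lcF_linq: "lcF (lin \<gamma> / lin \<gamma>') = 1"
  using lin_nz by (simp add: lcF_divide lcF_lin)

lemma Hs_sufficient_aux:
  assumes q: "q \<noteq> 0"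
  shows "p \<noteq> 0 \<Longrightarrow> r \<noteq> 0 \<Longrightarrow> (\<forall>\<gamma>. vF (orb q \<gamma>) (Fract p r) = 0) \<Longrightarrow>
    lcF (Fract p r) = q powi N \<Longrightarrow> Hs q (Fract p r)"
proof (induction "degree p + degree r" arbitrary: p r rule: less_induct)
  case (less p r)
  have v: "vO (orb q \<gamma>) p = vO (orb q \<gamma>) r" for \<gamma>
    using less.prems(3)[rule_format, of \<gamma>] vF_Fract[OF less.prems(1,2)] by simp
  show ?case
  proof (cases "\<exists>\<gamma>. poly p \<gamma> = 0")
    case True
    then obtain \<gamma> where \<gamma>: "poly p \<gamma> = 0" by auto
    have "vO (orb q \<gamma>) p > 0" by (rule vO_pos[OF less.prems(1) \<gamma> orb_self])
    then have "vO (orb q \<gamma>) r \<noteq> 0" using v[of \<gamma>] by simp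
    then obtain \<gamma>' where \<gamma>': "\<gamma>' \<in> orb q \<gamma>" "poly r \<gamma>' = 0" using vO_root by blast
    then obtain d where \<gamma>'eq: "\<gamma>' = q powi d * \<gamma>" unfolding orb_def by auto
    obtain p1 where p1: "p = [:-\<gamma>,1:] * p1" using \<gamma> by (auto simp: poly_eq_0_iff_dvd elim: dvdE)
    obtain r1 where r1: "r = [:-\<gamma>',1:] * r1" using \<gamma>' by (auto simp: poly_eq_0_iff_dvd elim: dvdE)
    have p1nz: "p1 \<noteq> 0" using p1 less.prems(1) by auto
    have r1nz: "r1 \<noteq> 0" using r1 less.prems(2) by auto
    have dp: "degree p = degree p1 + 1" using p1nz by (subst p1, subst degree_mult_eq) auto
    have dr: "degree r = degree r1 + 1" using r1nz by (subst r1, subst degree_mult_eq) auto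
    define L where "L = lin \<gamma> / lin \<gamma>'"
    have Lnz: "L \<noteq> 0" unfolding L_def using lin_nz by simp
    have h1nz: "Fract p1 r1 \<noteq> 0" using p1nz r1nz by (simp add: Zero_fract_def eq_fract)
    have hdec: "Fract p r = Fract p1 r1 * L"
      unfolding L_def lin_quot p1 r1 using p1nz r1nz by (simp add: eq_fract mult_ac)
    have vL: "vF (orb q \<delta>) L = 0" for \<delta>
      unfolding L_def vF_linq \<gamma>'eq using orb_mem_shift[OF q] by simp
    have v1: "\<forall>\<delta>. vF (orb q \<delta>) (Fract p1 r1) = 0"
    proof
      fix \<delta>
      have "vF (orb q \<delta>) (Fract p r) = vF (orb q \<delta>) (Fract p1 r1) + vF (orb q \<delta>) L"
        unfolding hdec by (rule vF_mult[OF h1nz Lnz])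
      then show "vF (orb q \<delta>) (Fract p1 r1) = 0" using less.prems(3) vL by simp
    qed
    have l1: "lcF (Fract p1 r1) = q powi N"
    proof -
      have lL: "lcF L = 1" unfolding L_def by (rule lcF_linq)
      show ?thesis using less.prems(4) lL unfolding hdec lcF_mult[OF h1nz Lnz] by simp
    qed
    have "Hs q (Fract p1 r1)"
      by (rule less.hyps[OF _ p1nz r1nz v1 l1]) (simp add: dp dr)
    moreover have "Hs q L" unfolding L_def \<gamma>'eq by (rule Hs_lin[OF q])
    ultimately show ?thesis unfolding hdec by (rule Hs_mult[OF q])
  next
    case False
    then have nop: "\<forall>\<gamma>. poly p \<gamma> \<noteq> 0" by auto
    have nor: "\<forall>\<gamma>. poly r \<gamma> \<noteq> 0"
    proof (rule ccontr)
      assume "\<not> (\<forall>\<gamma>. poly r \<gamma> \<noteq> 0)"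
      then obtain \<gamma> where \<gamma>: "poly r \<gamma> = 0" by auto
      have "vO (orb q \<gamma>) r > 0" by (rule vO_pos[OF less.prems(2) \<gamma> orb_self])
      moreover have "vO (orb q \<gamma>) p = 0" using vO_root nop by blast
      ultimately show False using v[of \<gamma>] by simp
    qed
    obtain a where a: "a \<noteq> 0" "p = [:a:]" using no_root_const nop by blast
    obtain b where b: "b \<noteq> 0" "r = [:b:]" using no_root_const nor by blast
    have "Fract p r = const_rf (a / b)"
      unfolding a b const_divide by (simp add: const_rf_def to_fract_def b)
    moreover have "a / b = q powi N" using less.prems(4) a b by (simp add: lcF_Fract)
    ultimately show ?thesis using Hs_qpow[OF q] by simp
  qed
qed

lemma Hs_sufficient:
  assumes q: "q \<noteq> 0" and h: "h \<noteq> 0" and v: "\<forall>\<gamma>. vF (orb q \<gamma>) h = 0" and l: "lcF h = q powi N"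
  shows "Hs q h"
  using h
proof (elim fract_nz_cases)
  fix p r assume "h = Fract p r" "p \<noteq> 0" "r \<noteq> 0"
  then show "Hs q h" using Hs_sufficient_aux[OF q, of p r N] v l by simp
qed

locale thm7 =
  fixes q \<zeta> lam :: complex and t R :: nat and T N :: int
    and r :: "nat \<Rightarrow> complex" and s :: "nat \<Rightarrow> int \<Rightarrow> nat \<Rightarrow> int"
  assumes q1: "norm q > 1"
    and t2: "t \<ge> 2"
    and prim: "primitive_root_of_unity t \<zeta>"
    and lam: "lam \<noteq> 0"
    and rnz: "\<forall>i\<in>{1..R}. r i \<noteq> 0"
    and dist: "\<forall>i\<in>{1..R}. \<forall>j\<in>{1..R}. i \<noteq> j \<longrightarrow>
           \<not> (\<exists>m n :: int. r i = \<zeta> powi m * q powi n * r j)"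
begin

abbreviation "A \<equiv> a_rf q \<zeta> t lam T N R r s"

lemma qnz: "q \<noteq> 0" using q1 by auto
lemma tpos: "t > 0" using t2 by simp
lemma zt: "\<zeta> ^ t = 1" using prim unfolding primitive_root_of_unity_def by simp
lemma znz: "\<zeta> \<noteq> 0"
proof
  assume "\<zeta> = 0" then have "\<zeta> ^ t = 0" using tpos by simp
  then show False using zt by simp
qed
lemma zmod: "\<zeta> ^ m = \<zeta> ^ (m mod t)"
proof -
  have "\<zeta> ^ m = \<zeta> ^ (t * (m div t) + m mod t)" by simp
  also have "\<dots> = (\<zeta> ^ t) ^ (m div t) * \<zeta> ^ (m mod t)" by (simp only: power_add power_mult)
  finally show ?thesis by (simp add: zt)
qed
lemma z1: "\<zeta> ^ m = 1 \<longleftrightarrow> m mod t = 0"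
proof
  assume h: "\<zeta> ^ m = 1"
  have "\<zeta> ^ (m mod t) = \<zeta> ^ m" by (rule zmod[symmetric])
  then have "\<zeta> ^ (m mod t) = 1" using h by simp
  moreover have "m mod t < t" using tpos by simp
  ultimately show "m mod t = 0" using prim unfolding primitive_root_of_unity_def by (metis neq0_conv)
next
  assume h: "m mod t = 0"
  have "\<zeta> ^ m = \<zeta> ^ (m mod t)" by (rule zmod)
  then show "\<zeta> ^ m = 1" using h by simp
qed
lemma zeq: assumes "\<zeta> ^ a = \<zeta> ^ b" shows "a mod t = b mod t"
proof (cases "a \<le> b")
  case True
  then have "\<zeta> ^ b = \<zeta> ^ a * \<zeta> ^ (b - a)" by (simp add: power_add[symmetric])
  then have "\<zeta> ^ (b - a) = 1" using assms znz by simp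
  then have "(b - a) mod t = 0" using z1 by simp
  have "b mod t = (a + (b - a)) mod t" using True by simp
  also have "\<dots> = (a mod t + (b - a) mod t) mod t" by (simp add: mod_add_eq)
  finally show ?thesis using \<open>(b - a) mod t = 0\<close> by simp
next
  case False
  then have "\<zeta> ^ a = \<zeta> ^ b * \<zeta> ^ (a - b)" by (simp add: power_add[symmetric])
  then have "\<zeta> ^ (a - b) = 1" using assms znz by simp
  then have "(a - b) mod t = 0" using z1 by simp
  have "a mod t = (b + (a - b)) mod t" using False by simp
  also have "\<dots> = (b mod t + (a - b) mod t) mod t" by (simp add: mod_add_eq)
  finally show ?thesis using \<open>(a - b) mod t = 0\<close> by simp
qed
lemma znorm: "norm \<zeta> = 1"
proof -
  have "norm \<zeta> ^ t = 1" using zt by (metis norm_one norm_power)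
  then have "norm \<zeta> ^ t = 1 ^ t" by simp
  then show ?thesis by (rule power_eq_imp_eq_base) (use tpos in auto)
qed

lemma qpow1: assumes "norm (q powi d) = 1" shows "d = 0"
proof (rule ccontr)
  assume d: "d \<noteq> 0"
  have n: "norm (q powi d) = norm q powi d" by (simp add: norm_power_int)
  show False
  proof (cases "d > 0")
    case True
    then have "norm q powi d > 1" using q1 by (simp add: power_int_def one_less_power)
    then show False using assms n by simp
  next
    case False
    then have "nat (-d) > 0" using d by simp
    then have "norm q ^ nat (-d) > 1" using q1 by (simp add: one_less_power)
    have e: "norm q powi d = inverse (norm q ^ nat (-d))" using False by (simp add: power_int_def power_inverse)
    have "norm q powi d < 1" unfolding e using \<open>norm q ^ nat (-d) > 1\<close> by (simp add: inverse_less_1_iff)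
    then show False using assms n by simp
  qed
qed

end

lemma ss_iter_nz': "c \<noteq> 0 \<Longrightarrow> g \<noteq> 0 \<Longrightarrow> (subst_scale c ^^ j) g \<noteq> 0"
  by (rule ss_iter_nz)

lemma vF_iter: assumes c: "c \<noteq> 0" and g: "g \<noteq> 0"
  shows "vF S ((subst_scale c ^^ j) g) = vF ((\<lambda>x. c^j * x) ` S) g"
proof (induct j arbitrary: S)
  case 0 then show ?case by simp
next
  case (Suc j)
  have "vF S ((subst_scale c ^^ Suc j) g) = vF ((\<lambda>x. c * x) ` S) ((subst_scale c ^^ j) g)"
    using c ss_iter_nz[OF c g, of j] by (simp add: vF_ss)
  also have "\<dots> = vF ((\<lambda>x. c^j * x) ` (\<lambda>x. c * x) ` S) g" by (rule Suc)
  also have "(\<lambda>x. c^j * x) ` (\<lambda>x. c * x) ` S = (\<lambda>x. c ^ Suc j * x) ` S"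
    by (simp add: image_image mult_ac)
  finally show ?case .
qed

lemma degF_iter: assumes c: "c \<noteq> 0" and g: "g \<noteq> 0"
  shows "degF ((subst_scale c ^^ j) g) = degF g"
  by (induct j) (simp_all add: degF_ss c ss_iter_nz[OF c g])

lemma lcF_iter: assumes c: "c \<noteq> 0" and g: "g \<noteq> 0"
  shows "lcF ((subst_scale c ^^ j) g) = (c ^ j) powi degF g * lcF g"
proof (induct j)
  case 0 then show ?case by simp
next
  case (Suc j)
  have "lcF ((subst_scale c ^^ Suc j) g) = c powi degF g * lcF ((subst_scale c ^^ j) g)"
    using c ss_iter_nz[OF c g, of j] by (simp add: lcF_ss degF_iter[OF c g])
  also have "\<dots> = (c ^ Suc j) powi degF g * lcF g"
    using Suc by (simp add: power_int_mult_distrib)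
  finally show ?case .
qed

lemma phi_nz: "c \<noteq> 0 \<Longrightarrow> g \<noteq> 0 \<Longrightarrow> phi c t n g \<noteq> 0"
  unfolding phi_def using ss_iter_nz by (simp add: power_int_not_zero)

lemma vF_phi: assumes c: "c \<noteq> 0" and g: "g \<noteq> 0"
  shows "vF S (phi c t n g) = (\<Sum>j<t. n j * vF ((\<lambda>x. c^j * x) ` S) g)"
  unfolding phi_def using ss_iter_nz[OF c g]
  by (simp add: vF_prod vF_powi power_int_not_zero vF_iter[OF c g])

lemma lcF_phi: assumes c: "c \<noteq> 0" and g: "g \<noteq> 0"
  shows "lcF (phi c t n g) = (\<Prod>j<t. ((c ^ j) powi degF g * lcF g) powi n j)"
  unfolding phi_def using ss_iter_nz[OF c g]
  by (simp add: lcF_prod lcF_powi power_int_not_zero lcF_iter[OF c g])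

lemma lin_ne: "zvar \<noteq> const_rf \<beta>" using lin_nz[of \<beta>] by simp

context thm7
begin

lemma A_nz: "A \<noteq> 0"
  by (simp add: a_rf_def lin_nz lin_ne zvar_nz const_nz lam power_int_not_zero)

lemma vF_A: "vF S A = (if 0 \<in> S then T else 0) +
   (\<Sum>k<t. \<Sum>d\<in>{-N-1..N}. \<Sum>i\<in>{1..R}. s k d i * (if \<zeta>^k * q powi d * r i \<in> S then 1 else 0))"
  unfolding a_rf_def
  by (simp add: lin_nz lin_ne zvar_nz const_nz lam power_int_not_zero vF_mult vF_prod vF_powi
      vF_const vF_zvar vF_lin)

lemma lcF_A: "lcF A = lam"
  unfolding a_rf_def
  by (simp add: lin_nz lin_ne zvar_nz const_nz lam power_int_not_zero lcF_mult lcF_prod lcF_powi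
      lcF_const lcF_zvar lcF_lin)

end

context thm7
begin

definition Ecorr :: "(nat \<Rightarrow> int) \<Rightarrow> nat \<Rightarrow> nat \<Rightarrow> int" where
  "Ecorr n i l = (\<Sum>j<t. n j * aik N s i ((l + j) mod t))"

lemma orb_nz: "\<delta> \<noteq> 0 \<Longrightarrow> 0 \<notin> orb q \<delta>"
  unfolding orb_def using qnz by (auto simp: power_int_not_zero)

lemma orb_0: "orb q 0 = {0}"
  unfolding orb_def by auto

lemma orb_image: "(\<lambda>x. c * x) ` orb q \<gamma> = orb q (c * \<gamma>)"
  unfolding orb_def image_image by (simp add: mult_ac)

lemma mem_shift': "(\<zeta>^k * q powi d * x \<in> orb q \<delta>) = (\<zeta>^k * x \<in> orb q \<delta>)"
proof -
  have e: "\<zeta>^k * q powi d * x = q powi d * (\<zeta>^k * x)" by (simp add: mult_ac)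
  show ?thesis by (subst e) (rule orb_mem_shift[OF qnz])
qed

lemma vF_A_orb: assumes "\<delta> \<noteq> 0"
  shows "vF (orb q \<delta>) A = (\<Sum>k<t. \<Sum>i\<in>{1..R}. aik N s i k * (if \<zeta>^k * r i \<in> orb q \<delta> then 1 else 0))"
proof -
  have "vF (orb q \<delta>) A =
     (\<Sum>k<t. \<Sum>d\<in>{-N-1..N}. \<Sum>i\<in>{1..R}. s k d i * (if \<zeta>^k * r i \<in> orb q \<delta> then 1 else 0))"
    unfolding vF_A using orb_nz[OF assms] by (simp add: mem_shift')
  also have "\<dots> = (\<Sum>k<t. \<Sum>i\<in>{1..R}. \<Sum>d\<in>{-N-1..N}. s k d i * (if \<zeta>^k * r i \<in> orb q \<delta> then 1 else 0))"
    by (rule sum.cong[OF refl], rule sum.swap)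
  also have "\<dots> = (\<Sum>k<t. \<Sum>i\<in>{1..R}. aik N s i k * (if \<zeta>^k * r i \<in> orb q \<delta> then 1 else 0))"
    unfolding aik_def by (simp add: sum_distrib_right)
  finally show ?thesis .
qed

lemma vF_A_0: "vF (orb q 0) A = T"
proof -
  have "\<zeta>^k * q powi d * r i \<noteq> 0" if "i \<in> {1..R}" for k d i
    using that rnz znz qnz by (simp add: power_int_not_zero)
  then show ?thesis unfolding vF_A orb_0 by (simp add: sum.neutral znz qnz)
qed

lemma vF_phi_orb: "vF (orb q \<gamma>) (phi \<zeta> t n A) = (\<Sum>j<t. n j * vF (orb q (\<zeta>^j * \<gamma>)) A)"
  by (simp add: vF_phi[OF znz A_nz] orb_image)

lemma orb_match:
  assumes l: "l < t" and i0: "i0 \<in> {1..R}" and \<gamma>: "\<gamma> = q powi e * (\<zeta>^l * r i0)"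
    and j: "j < t" and k: "k < t" and i: "i \<in> {1..R}"
  shows "\<zeta>^k * r i \<in> orb q (\<zeta>^j * \<gamma>) \<longleftrightarrow> i = i0 \<and> k = (l + j) mod t"
proof
  assume "\<zeta>^k * r i \<in> orb q (\<zeta>^j * \<gamma>)"
  then obtain d where d: "\<zeta>^k * r i = q powi d * (\<zeta>^j * \<gamma>)" unfolding orb_def by auto
  have e1: "\<zeta>^k * r i = q powi (d + e) * \<zeta>^(j+l) * r i0"
    unfolding d \<gamma> using qnz by (simp add: power_int_add power_add mult_ac)
  have ii: "i = i0"
  proof (rule ccontr)
    assume ne: "i \<noteq> i0"
    have "r i = \<zeta> powi (int (j+l) - int k) * q powi (d + e) * r i0"
    proof -
      have "\<zeta> powi (int (j+l) - int k) = \<zeta> powi (int (j+l)) / \<zeta> powi (int k)"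
        using znz by (intro power_int_diff) simp
      also have "\<dots> = \<zeta>^(j+l) / \<zeta>^k" by (simp only: power_int_of_nat)
      finally have "\<zeta> powi (int (j+l) - int k) = \<zeta>^(j+l) / \<zeta>^k" .
      have "r i = (\<zeta>^k * r i) / \<zeta>^k" using znz by simp
      also have "\<dots> = q powi (d + e) * \<zeta>^(j+l) * r i0 / \<zeta>^k" using e1 by simp
      also have "\<dots> = (\<zeta>^(j+l) / \<zeta>^k) * q powi (d + e) * r i0" by (simp add: mult_ac divide_inverse)
      finally show ?thesis using \<open>\<zeta> powi (int (j+l) - int k) = \<zeta>^(j+l) / \<zeta>^k\<close> by simp
    qed
    then show False using dist i i0 ne by blast
  qed
  have rnz0: "r i0 \<noteq> 0" using rnz i0 by auto
  have e2: "\<zeta>^k = q powi (d + e) * \<zeta>^(j+l)" using e1 rnz0 unfolding ii by simp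
  have "norm (\<zeta>^k) = norm (q powi (d+e)) * norm (\<zeta>^(j+l))" unfolding e2 by (simp add: norm_mult)
  then have "norm (q powi (d+e)) = 1" by (simp add: norm_power znorm)
  then have "d + e = 0" by (rule qpow1)
  then have "\<zeta>^k = \<zeta>^(j+l)" using e2 by simp
  then have "k mod t = (j+l) mod t" by (rule zeq)
  then have "k = (l+j) mod t" using k by (simp add: add.commute)
  then show "i = i0 \<and> k = (l + j) mod t" using ii by simp
next
  assume a: "i = i0 \<and> k = (l + j) mod t"
  have zk: "\<zeta>^k = \<zeta>^(l+j)" using a zmod[of "l+j"] by simp
  have "\<zeta>^k * r i = q powi (-e) * (\<zeta>^j * \<gamma>)"
    unfolding zk \<gamma> a[THEN conjunct1] using qnz by (simp add: power_int_minus power_add field_simps)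
  then show "\<zeta>^k * r i \<in> orb q (\<zeta>^j * \<gamma>)" unfolding orb_def by auto
qed

lemma orb_classify:
  assumes "\<gamma> \<noteq> 0"
  shows "(\<forall>j<t. \<forall>k<t. \<forall>i\<in>{1..R}. \<zeta>^k * r i \<notin> orb q (\<zeta>^j * \<gamma>)) \<or>
         (\<exists>l<t. \<exists>i0\<in>{1..R}. \<exists>e. \<gamma> = q powi e * (\<zeta>^l * r i0))"
proof (cases "\<forall>j<t. \<forall>k<t. \<forall>i\<in>{1..R}. \<zeta>^k * r i \<notin> orb q (\<zeta>^j * \<gamma>)")
  case True then show ?thesis by blast
next
  case False
  then obtain j k i where jki: "j < t" "k < t" "i \<in> {1..R}" "\<zeta>^k * r i \<in> orb q (\<zeta>^j * \<gamma>)" by blast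
  then obtain d where d: "\<zeta>^k * r i = q powi d * (\<zeta>^j * \<gamma>)" unfolding orb_def by auto
  define l where "l = (k + (t - j)) mod t"
  have zl: "\<zeta>^l * \<zeta>^j = \<zeta>^k"
  proof -
    have "\<zeta>^l = \<zeta>^(k + (t - j))" unfolding l_def by (rule zmod[symmetric])
    then have "\<zeta>^l * \<zeta>^j = \<zeta>^(k + (t - j) + j)" by (simp add: power_add)
    also have "k + (t - j) + j = k + t" using jki(1) by simp
    finally show ?thesis by (simp add: power_add zt)
  qed
  have "\<gamma> = q powi (-d) * (\<zeta>^l * r i)"
  proof -
    have "\<zeta>^l * \<zeta>^j * r i = q powi d * (\<zeta>^j * \<gamma>)" using d zl by simp
    then show ?thesis using znz qnz by (simp add: power_int_minus field_simps)
  qed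
  moreover have "l < t" unfolding l_def using tpos by simp
  ultimately show ?thesis using jki(3) by blast
qed

lemma double_delta:
  fixes f :: "nat \<Rightarrow> nat \<Rightarrow> int"
  assumes "m < t" "i0 \<in> {1..R}"
  shows "(\<Sum>k<t. \<Sum>i\<in>{1..R}. f i k * (if i = i0 \<and> k = m then 1 else 0)) = f i0 m"
proof -
  have "(\<Sum>k<t. \<Sum>i\<in>{1..R}. f i k * (if i = i0 \<and> k = m then 1 else 0)) =
        (\<Sum>k<t. if k = m then f i0 k else 0)"
    by (rule sum.cong[OF refl]) (use assms in \<open>auto simp: if_distrib sum.delta' cong: if_cong\<close>)
  also have "\<dots> = f i0 m" using assms by (simp add: sum.delta')
  finally show ?thesis .
qed

lemma vF_phi_case2:
  assumes l: "l < t" and i0: "i0 \<in> {1..R}" and \<gamma>: "\<gamma> = q powi e * (\<zeta>^l * r i0)"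
  shows "vF (orb q \<gamma>) (phi \<zeta> t n A) = Ecorr n i0 l"
proof -
  have \<gamma>nz: "\<zeta>^j * \<gamma> \<noteq> 0" for j
    unfolding \<gamma> using znz qnz rnz i0 by (simp add: power_int_not_zero)
  have "vF (orb q \<gamma>) (phi \<zeta> t n A) = (\<Sum>j<t. n j * vF (orb q (\<zeta>^j * \<gamma>)) A)" by (rule vF_phi_orb)
  also have "\<dots> = (\<Sum>j<t. n j * aik N s i0 ((l + j) mod t))"
  proof (rule sum.cong[OF refl])
    fix j assume j: "j \<in> {..<t}"
    have "vF (orb q (\<zeta>^j * \<gamma>)) A =
        (\<Sum>k<t. \<Sum>i\<in>{1..R}. aik N s i k * (if i = i0 \<and> k = (l + j) mod t then 1 else 0))"
      unfolding vF_A_orb[OF \<gamma>nz]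
      by (intro sum.cong refl) (use orb_match[OF l i0 \<gamma>] j in auto)
    also have "\<dots> = aik N s i0 ((l + j) mod t)"
      by (rule double_delta) (use tpos i0 in auto)
    finally show "n j * vF (orb q (\<zeta>^j * \<gamma>)) A = n j * aik N s i0 ((l + j) mod t)" by simp
  qed
  finally show ?thesis unfolding Ecorr_def .
qed

lemma vF_phi_case1:
  assumes "\<forall>j<t. \<forall>k<t. \<forall>i\<in>{1..R}. \<zeta>^k * r i \<notin> orb q (\<zeta>^j * \<gamma>)" and "\<gamma> \<noteq> 0"
  shows "vF (orb q \<gamma>) (phi \<zeta> t n A) = 0"
proof -
  have \<gamma>nz: "\<zeta>^j * \<gamma> \<noteq> 0" for j using assms(2) znz by simp
  show ?thesis unfolding vF_phi_orb vF_A_orb[OF \<gamma>nz] using assms(1) by (auto intro!: sum.neutral)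
qed

lemma vF_phi_0: "vF (orb q 0) (phi \<zeta> t n A) = T * (\<Sum>j<t. n j)"
  unfolding vF_phi_orb by (simp add: vF_A_0 sum_distrib_left mult.commute)

lemma orb_cond_iff:
  "(\<forall>\<gamma>. vF (orb q \<gamma>) (phi \<zeta> t n A) = 0) \<longleftrightarrow>
   T * (\<Sum>j<t. n j) = 0 \<and> (\<forall>l<t. \<forall>i\<in>{1..R}. Ecorr n i l = 0)"
proof
  assume a: "\<forall>\<gamma>. vF (orb q \<gamma>) (phi \<zeta> t n A) = 0"
  have "T * (\<Sum>j<t. n j) = 0" using a[rule_format, of 0] vF_phi_0 by simp
  moreover have "Ecorr n i l = 0" if "l < t" "i \<in> {1..R}" for l i
    using a[rule_format, of "q powi 0 * (\<zeta>^l * r i)"] vF_phi_case2[OF that, of _ 0] by simp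
  ultimately show "T * (\<Sum>j<t. n j) = 0 \<and> (\<forall>l<t. \<forall>i\<in>{1..R}. Ecorr n i l = 0)" by blast
next
  assume a: "T * (\<Sum>j<t. n j) = 0 \<and> (\<forall>l<t. \<forall>i\<in>{1..R}. Ecorr n i l = 0)"
  show "\<forall>\<gamma>. vF (orb q \<gamma>) (phi \<zeta> t n A) = 0"
  proof
    fix \<gamma>
    show "vF (orb q \<gamma>) (phi \<zeta> t n A) = 0"
    proof (cases "\<gamma> = 0")
      case True then show ?thesis using a vF_phi_0 by simp
    next
      case False
      from orb_classify[OF False] show ?thesis
      proof
        assume "\<forall>j<t. \<forall>k<t. \<forall>i\<in>{1..R}. \<zeta>^k * r i \<notin> orb q (\<zeta>^j * \<gamma>)"
        then show ?thesis using vF_phi_case1 False by blast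
      next
        assume "\<exists>l<t. \<exists>i0\<in>{1..R}. \<exists>e. \<gamma> = q powi e * (\<zeta>^l * r i0)"
        then obtain l i0 e where "l < t" "i0 \<in> {1..R}" "\<gamma> = q powi e * (\<zeta>^l * r i0)" by blast
        then show ?thesis using vF_phi_case2 a by simp
      qed
    qed
  qed
qed

end

definition primr :: "nat \<Rightarrow> complex \<Rightarrow> bool" where
  "primr t c \<longleftrightarrow> 0 < t \<and> c ^ t = 1 \<and> (\<forall>m. 0 < m \<and> m < t \<longrightarrow> c ^ m \<noteq> 1)"

lemma primr_nz: "primr t c \<Longrightarrow> c \<noteq> 0"
  unfolding primr_def by (metis power_0_left zero_neq_one less_not_refl3)

lemma primr_eq: assumes p: "primr t c" and l: "l < t" and l0: "l0 < t" and e: "c ^ l = c ^ l0"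
  shows "l = l0"
proof (rule ccontr)
  assume ne: "l \<noteq> l0"
  have cnz: "c \<noteq> 0" using primr_nz[OF p] .
  show False
  proof (cases "l < l0")
    case True
    have "c ^ l0 = c ^ l * c ^ (l0 - l)" using True by (simp add: power_add[symmetric])
    then have "c ^ (l0 - l) = 1" using e cnz by simp
    moreover have "0 < l0 - l" "l0 - l < t" using True l0 by auto
    ultimately show False using p unfolding primr_def by blast
  next
    case False
    then have lt: "l0 < l" using ne by simp
    have "c ^ l = c ^ l0 * c ^ (l - l0)" using lt by (simp add: power_add[symmetric])
    then have "c ^ (l - l0) = 1" using e cnz by simp
    moreover have "0 < l - l0" "l - l0 < t" using lt l by auto
    ultimately show False using p unfolding primr_def by blast
  qed
qed

lemma primr_inverse: "primr t c \<Longrightarrow> primr t (inverse c)"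
  unfolding primr_def by (auto simp: power_inverse)

lemma geo_sum: assumes "\<rho> ^ t = 1" "\<rho> \<noteq> 1"
  shows "(\<Sum>m<t. \<rho> ^ m) = (0::complex)"
  using assms by (simp add: sum_gp_strict)

lemma DFT_inj:
  fixes f :: "nat \<Rightarrow> complex"
  assumes p: "primr t c" and z: "\<forall>m<t. (\<Sum>l<t. c ^ (m * l) * f l) = 0"
  shows "\<forall>l<t. f l = 0"
proof (intro allI impI)
  fix l0 assume l0: "l0 < t"
  have cnz: "c \<noteq> 0" using primr_nz[OF p] .
  have ct: "c ^ t = 1" using p unfolding primr_def by simp
  define ci where "ci = inverse c"
  have "0 = (\<Sum>m<t. ci ^ (m * l0) * (\<Sum>l<t. c ^ (m * l) * f l))" using z by simp
  also have "\<dots> = (\<Sum>m<t. \<Sum>l<t. ci ^ (m * l0) * (c ^ (m * l) * f l))"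
    by (simp only: sum_distrib_left)
  also have "\<dots> = (\<Sum>l<t. \<Sum>m<t. ci ^ (m * l0) * (c ^ (m * l) * f l))"
    by (rule sum.swap)
  also have "\<dots> = (\<Sum>l<t. \<Sum>m<t. f l * (c ^ l * ci ^ l0) ^ m)"
  proof (intro sum.cong refl)
    fix l m :: nat
    have "(c ^ l * ci ^ l0) ^ m = c ^ (l * m) * ci ^ (l0 * m)"
      by (simp only: power_mult_distrib power_mult)
    then show "ci ^ (m * l0) * (c ^ (m * l) * f l) = f l * (c ^ l * ci ^ l0) ^ m"
      by (simp add: mult_ac)
  qed
  also have "\<dots> = (\<Sum>l<t. f l * (\<Sum>m<t. (c ^ l * ci ^ l0) ^ m))"
    by (simp only: sum_distrib_left)
  also have "\<dots> = (\<Sum>l<t. if l = l0 then f l * of_nat t else 0)"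
  proof (rule sum.cong[OF refl])
    fix l assume l: "l \<in> {..<t}"
    show "f l * (\<Sum>m<t. (c ^ l * ci ^ l0) ^ m) = (if l = l0 then f l * of_nat t else 0)"
    proof (cases "l = l0")
      case True
      then have "c ^ l * ci ^ l0 = 1" unfolding ci_def using cnz by (simp add: power_inverse)
      then show ?thesis using True by simp
    next
      case False
      have ne: "c ^ l * ci ^ l0 \<noteq> 1"
      proof
        assume "c ^ l * ci ^ l0 = 1"
        then have "c ^ l = c ^ l0" unfolding ci_def using cnz by (simp add: power_inverse field_simps)
        then show False using primr_eq[OF p _ l0] l False by auto
      qed
      have "(c ^ l * ci ^ l0) ^ t = 1" unfolding ci_def
        by (simp add: power_mult_distrib power_inverse power_mult[symmetric] mult.commute[of _ t]
            power_mult ct)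
      then show ?thesis using False geo_sum[OF _ ne] by simp
    qed
  qed
  also have "\<dots> = f l0 * of_nat t" using l0 by (simp add: sum.delta')
  finally show "f l0 = 0" using p unfolding primr_def by simp
qed

context thm7
begin

lemma primr_z: "primr t \<zeta>"
  using prim unfolding primr_def primitive_root_of_unity_def by simp

definition Nhat :: "(nat \<Rightarrow> int) \<Rightarrow> nat \<Rightarrow> complex" where
  "Nhat n m = (\<Sum>j<t. of_int (n j) * inverse \<zeta> ^ (m * j))"

lemma Nhat_0: "Nhat n 0 = of_int (\<Sum>j<t. n j)"
  unfolding Nhat_def by simp

lemma shift_bij: assumes j: "j < t" shows "bij_betw (\<lambda>l. (l + j) mod t) {..<t} {..<t}"
proof -
  have inj: "inj_on (\<lambda>l. (l + j) mod t) {..<t}"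
  proof
    fix l l' assume l: "l \<in> {..<t}" "l' \<in> {..<t}" and e: "(l + j) mod t = (l' + j) mod t"
    have "\<zeta>^l * \<zeta>^j = \<zeta>^l' * \<zeta>^j"
      using arg_cong[OF e, of "\<lambda>x. \<zeta>^x"] zmod[of "l+j"] zmod[of "l'+j"] by (simp add: power_add)
    then have "\<zeta>^l = \<zeta>^l'" using znz by simp
    then show "l = l'" using primr_eq[OF primr_z] l by auto
  qed
  have "(\<lambda>l. (l + j) mod t) ` {..<t} = {..<t}"
    by (rule endo_inj_surj[OF _ _ inj]) (use tpos in auto)
  then show ?thesis using inj by (simp add: bij_betw_def)
qed

lemma Ehat:
  "(\<Sum>l<t. \<zeta> ^ (m * l) * of_int (Ecorr n i l)) = Nhat n m * Dmat \<zeta> t N s m i"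
proof -
  define a where "a u = (of_int (aik N s i u) :: complex)" for u
  have inner: "(\<Sum>l<t. \<zeta> ^ (m * l) * a ((l + j) mod t)) = inverse \<zeta> ^ (m * j) * Dmat \<zeta> t N s m i"
    if j: "j < t" for j
  proof -
    have "(\<Sum>l<t. \<zeta> ^ (m * l) * a ((l + j) mod t)) =
          (\<Sum>l<t. inverse \<zeta> ^ (m * j) * (\<zeta> ^ (m * ((l + j) mod t)) * a ((l + j) mod t)))"
    proof (rule sum.cong[OF refl])
      fix l
      have "\<zeta> ^ (m * ((l + j) mod t)) = (\<zeta> ^ ((l + j) mod t)) ^ m"
        by (simp only: mult.commute[of m] power_mult)
      also have "\<dots> = (\<zeta> ^ (l + j)) ^ m" by (simp only: zmod[of "l+j", symmetric])
      also have "\<dots> = \<zeta> ^ (m * (l + j))" by (simp only: mult.commute[of m] power_mult)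
      finally have "\<zeta> ^ (m * ((l + j) mod t)) = \<zeta> ^ (m * (l + j))" .
      then show "\<zeta> ^ (m * l) * a ((l + j) mod t) =
          inverse \<zeta> ^ (m * j) * (\<zeta> ^ (m * ((l + j) mod t)) * a ((l + j) mod t))"
        using znz by (simp add: power_add distrib_left power_inverse field_simps)
    qed
    also have "\<dots> = inverse \<zeta> ^ (m * j) * (\<Sum>l<t. \<zeta> ^ (m * ((l + j) mod t)) * a ((l + j) mod t))"
      by (simp add: sum_distrib_left)
    also have "(\<Sum>l<t. \<zeta> ^ (m * ((l + j) mod t)) * a ((l + j) mod t)) = (\<Sum>u<t. \<zeta> ^ (m * u) * a u)"
      using sum.reindex_bij_betw[OF shift_bij[OF j], of "\<lambda>u. \<zeta> ^ (m * u) * a u"] by simp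
    also have "\<dots> = Dmat \<zeta> t N s m i" unfolding Dmat_def a_def by simp
    finally show ?thesis .
  qed
  have "(\<Sum>l<t. \<zeta> ^ (m * l) * of_int (Ecorr n i l)) =
        (\<Sum>l<t. \<Sum>j<t. of_int (n j) * (\<zeta> ^ (m * l) * a ((l + j) mod t)))"
    unfolding Ecorr_def a_def by (simp add: sum_distrib_left mult_ac)
  also have "\<dots> = (\<Sum>j<t. of_int (n j) * (\<Sum>l<t. \<zeta> ^ (m * l) * a ((l + j) mod t)))"
    by (subst sum.swap) (simp add: sum_distrib_left)
  also have "\<dots> = (\<Sum>j<t. of_int (n j) * (inverse \<zeta> ^ (m * j) * Dmat \<zeta> t N s m i))"
    by (rule sum.cong[OF refl]) (simp add: inner)
  also have "\<dots> = Nhat n m * Dmat \<zeta> t N s m i"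
    unfolding Nhat_def sum_distrib_right by (simp add: mult_ac)
  finally show ?thesis .
qed

lemma corr_fwd: assumes "\<forall>l<t. Ecorr n i l = 0" shows "\<forall>m<t. Nhat n m * Dmat \<zeta> t N s m i = 0"
  using Ehat assms by (metis (no_types, lifting) lessThan_iff mult_zero_right of_int_0 sum.neutral)

lemma corr_bwd: assumes "\<forall>m<t. Nhat n m * Dmat \<zeta> t N s m i = 0" shows "\<forall>l<t. Ecorr n i l = 0"
proof -
  have "\<forall>l<t. (of_int (Ecorr n i l) :: complex) = 0"
    by (rule DFT_inj[OF primr_z]) (use assms Ehat in simp)
  then show ?thesis by simp
qed

lemma Nhat_nz: assumes "\<exists>j<t. n j \<noteq> 0" shows "\<exists>m<t. Nhat n m \<noteq> 0"
proof (rule ccontr)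
  assume "\<not> (\<exists>m<t. Nhat n m \<noteq> 0)"
  then have "\<forall>m<t. (\<Sum>l<t. inverse \<zeta> ^ (m * l) * of_int (n l)) = 0"
    unfolding Nhat_def by (simp add: mult.commute)
  then have "\<forall>l<t. (of_int (n l) :: complex) = 0" by (rule DFT_inj[OF primr_inverse[OF primr_z]])
  then show False using assms by auto
qed

end

abbreviation mq :: "rat poly \<Rightarrow> complex poly" where "mq \<equiv> map_poly of_rat"

lemma coeff_mq: "coeff (mq p) i = of_rat (coeff p i)"
  by (simp add: coeff_map_poly)

lemma mq_mult: "mq (p * q) = mq p * mq q"
  by (rule poly_eqI) (simp add: coeff_mq coeff_mult of_rat_sum of_rat_mult)

lemma mq_add: "mq (p + q) = mq p + mq q"
  by (rule poly_eqI) (simp add: coeff_mq of_rat_add)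

lemma mq_diff: "mq (p - q) = mq p - mq q"
  by (rule poly_eqI) (simp add: coeff_mq of_rat_diff)

lemma mq_sum: "mq (\<Sum>u\<in>A. f u) = (\<Sum>u\<in>A. mq (f u))"
  by (induct A rule: infinite_finite_induct) (simp_all add: mq_add)

lemma mq_monom: "mq (monom c n) = monom (of_rat c) n"
  by (simp add: map_poly_monom)

definition evq :: "rat poly \<Rightarrow> complex \<Rightarrow> complex" where
  "evq p x = poly (mq p) x"

lemma evq_mult: "evq (p * q) x = evq p x * evq q x"
  unfolding evq_def by (simp add: mq_mult)
lemma evq_add: "evq (p + q) x = evq p x + evq q x"
  unfolding evq_def by (simp add: mq_add)
lemma evq_diff: "evq (p - q) x = evq p x - evq q x"
  unfolding evq_def by (simp add: mq_diff)
lemma evq_sum_monom: "evq (\<Sum>u\<in>A. monom (c u) u) x = (\<Sum>u\<in>A. of_rat (c u) * x ^ u)"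
  unfolding evq_def by (simp add: mq_sum mq_monom poly_sum poly_monom)
lemma evq_monom: "evq (monom c n) x = of_rat c * x ^ n"
  unfolding evq_def by (simp add: mq_monom poly_monom)
lemma evq_const: "evq [:c:] x = of_rat c"
  unfolding evq_def by (simp add: map_poly_pCons)
lemma evq_lin: "evq [:a, b:] x = of_rat a + of_rat b * x"
  unfolding evq_def by (simp add: map_poly_pCons)

lemma evq_altdef: assumes "degree p < t"
  shows "evq p x = (\<Sum>u<t. of_rat (coeff p u) * x ^ u)"
proof -
  have "evq p x = (\<Sum>u\<le>degree p. of_rat (coeff p u) * x ^ u)"
    unfolding evq_def poly_altdef by (simp add: coeff_mq degree_map_poly)
  also have "\<dots> = (\<Sum>u<t. of_rat (coeff p u) * x ^ u)"
    by (rule sum.mono_neutral_left) (use assms in \<open>auto simp: coeff_eq_0\<close>)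
  finally show ?thesis .
qed

lemma xt_factor: "[:-1, 1:] * (\<Sum>u<t. monom 1 u) = monom (1::rat) t - 1"
proof (induct t)
  case 0 then show ?case by simp
next
  case (Suc t)
  have m: "[:-1, 1:] * monom (1::rat) t = monom 1 (Suc t) - monom 1 t"
    by (simp add: monom_Suc algebra_simps)
  show ?case using Suc m by (simp add: algebra_simps)
qed

lemma degree_xt: assumes "0 < t" shows "degree (monom (1::rat) t - 1) = t"
proof -
  have "monom (1::rat) t - 1 = monom 1 t + (- 1)" by simp
  also have "degree \<dots> = degree (monom (1::rat) t)"
    by (rule degree_add_eq_left) (use assms in \<open>simp add: degree_monom_eq\<close>)
  finally show ?thesis by (simp add: degree_monom_eq)
qed

lemma int_scale:
  fixes c :: "nat \<Rightarrow> rat"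
  obtains D :: int and g :: "nat \<Rightarrow> int" where "D > 0" "\<And>u. u < t \<Longrightarrow> of_int (g u) = of_int D * c u"
proof -
  define D where "D = (\<Prod>u<t. snd (quotient_of (c u)))"
  define g where "g u = fst (quotient_of (c u)) * (D div snd (quotient_of (c u)))" for u
  have Dpos: "D > 0" unfolding D_def by (rule prod_pos) (simp add: quotient_of_denom_pos')
  have "of_int (g u) = of_int D * c u" if u: "u < t" for u
  proof -
    obtain a b where ab: "quotient_of (c u) = (a, b)" by (cases "quotient_of (c u)")
    have b: "b > 0" using quotient_of_denom_pos[OF ab] .
    have cu: "c u = of_int a / of_int b" by (rule quotient_of_div[OF ab])
    have "b dvd D" unfolding D_def using u ab
      by (metis dvd_prod_eqI finite_lessThan lessThan_iff snd_conv)
    then have Db: "D = b * (D div b)" by simp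
    have "of_int (g u) = (of_int a * of_int (D div b) :: rat)" unfolding g_def ab by simp
    also have "\<dots> = of_int D * (of_int a / of_int b)"
      using b by (subst (2) Db) (simp add: field_simps)
    finally show ?thesis using cu by simp
  qed
  then show ?thesis using that Dpos by blast
qed

context thm7
begin

definition Apoly :: "nat \<Rightarrow> rat poly" where
  "Apoly i = (\<Sum>u<t. monom (of_int (aik N s i u)) u)"

lemma evq_Apoly: "evq (Apoly i) (\<zeta>^m) = Dmat \<zeta> t N s m i"
  unfolding Apoly_def evq_sum_monom Dmat_def
  by (rule sum.cong[OF refl]) (simp add: power_mult[symmetric] mult.commute)

definition rho :: "nat \<Rightarrow> nat" where "rho j = (if j = 0 then 0 else t - j)"

lemma rho_lt: "j < t \<Longrightarrow> rho j < t" unfolding rho_def using tpos by auto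
lemma rho_rho: "j < t \<Longrightarrow> rho (rho j) = j" unfolding rho_def by auto
lemma rho_bij: "bij_betw rho {..<t} {..<t}"
  by (rule bij_betw_byWitness[of _ rho]) (auto simp: rho_rho rho_lt)
lemma rho_pow: assumes "u < t" shows "inverse \<zeta> ^ (m * rho u) = \<zeta> ^ (m * u)"
proof -
  have "\<zeta> ^ (u + rho u) = 1" unfolding rho_def using assms zt by auto
  have "\<zeta> ^ (m * u) * \<zeta> ^ (m * rho u) = \<zeta> ^ (m * (u + rho u))" by (simp only: distrib_left power_add)
  also have "\<dots> = (\<zeta> ^ (u + rho u)) ^ m" by (simp only: mult.commute[of m] power_mult)
  also have "\<dots> = 1" using \<open>\<zeta> ^ (u + rho u) = 1\<close> by simp
  finally have "\<zeta> ^ (m * u) * \<zeta> ^ (m * rho u) = 1" .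
  then show ?thesis using znz by (simp add: power_inverse field_simps)
qed

lemma evq_one: "evq 1 x = 1" unfolding evq_def by simp

lemma zpow_t: "(\<zeta> ^ m) ^ t = 1"
proof -
  have "(\<zeta> ^ m) ^ t = (\<zeta> ^ t) ^ m" by (simp only: power_mult[symmetric] mult.commute)
  then show ?thesis by (simp add: zt)
qed

lemma exist_n:
  assumes k: "0 < k" "k < t" and row: "\<forall>i\<in>{1..R}. Dmat \<zeta> t N s k i = 0"
  shows "\<exists>n. (\<exists>j<t. n j \<noteq> 0) \<and> (\<Sum>j<t. n j) = 0 \<and> (\<forall>l<t. \<forall>i\<in>{1..R}. Ecorr n i l = 0)"
proof -
  define \<omega> where "\<omega> = \<zeta> ^ k"
  have \<omega>t: "\<omega> ^ t = 1" unfolding \<omega>_def by (rule zpow_t)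
  have \<omega>1: "\<omega> \<noteq> 1" unfolding \<omega>_def using z1[of k] k by simp
  define Psi :: "rat poly" where "Psi = (\<Sum>u<t. monom 1 u)"
  have evPsi: "evq Psi x = (\<Sum>u<t. x ^ u)" for x unfolding Psi_def evq_sum_monom by simp
  have Psi\<omega>: "evq Psi \<omega> = 0" unfolding evPsi by (rule geo_sum[OF \<omega>t \<omega>1])
  have Psinz: "Psi \<noteq> 0"
  proof
    assume "Psi = 0" then have "evq Psi 1 = 0" by (simp add: evq_def)
    then show False unfolding evPsi using tpos by simp
  qed
  define I where "I P \<longleftrightarrow> P \<noteq> 0 \<and> evq P \<omega> = 0" for P
  have "I Psi" unfolding I_def using Psinz Psi\<omega> by simp
  then obtain P where P: "I P" and Pmin: "\<forall>P'. I P' \<longrightarrow> degree P \<le> degree P'"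
    using ex_has_least_nat[of I Psi degree] by blast
  have Pnz: "P \<noteq> 0" and P\<omega>: "evq P \<omega> = 0" using P unfolding I_def by auto
  have Pdvd: "P dvd B" if B: "evq B \<omega> = 0" for B
  proof (rule ccontr)
    assume nd: "\<not> P dvd B"
    then have m0: "B mod P \<noteq> 0" by (simp add: dvd_eq_mod_eq_0)
    have "evq (B mod P) \<omega> = evq B \<omega> - evq (B div P) \<omega> * evq P \<omega>"
    proof -
      have "B = B div P * P + B mod P" by simp
      then have "evq B \<omega> = evq (B div P) \<omega> * evq P \<omega> + evq (B mod P) \<omega>"
        by (metis evq_add evq_mult)
      then show ?thesis by simp
    qed
    then have "I (B mod P)" unfolding I_def using m0 B P\<omega> by simp
    then have "degree P \<le> degree (B mod P)" using Pmin by blast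
    moreover have "degree (B mod P) < degree P" using degree_mod_less'[OF Pnz m0] .
    ultimately show False by simp
  qed
  obtain Q0 where Q0: "Psi = P * Q0" using Pdvd[OF Psi\<omega>] by (elim dvdE)
  define W where "W = [:-1, 1:] * Q0"
  have PW: "P * W = monom 1 t - 1"
  proof -
    have "P * W = [:-1,1:] * (P * Q0)" unfolding W_def by (simp only: mult.left_commute)
    also have "\<dots> = [:-1,1:] * Psi" using Q0 by simp
    also have "\<dots> = monom 1 t - 1" unfolding Psi_def by (rule xt_factor)
    finally show ?thesis .
  qed
  have Wnz: "W \<noteq> 0" using PW degree_xt[OF tpos] tpos by auto
  have degP: "degree P > 0"
  proof (rule ccontr)
    assume "\<not> degree P > 0"
    then have "P = [:coeff P 0:]" using degree_0_id[of P] by simp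
    then have "evq P \<omega> = of_rat (coeff P 0)" by (metis evq_const)
    moreover have "coeff P 0 \<noteq> 0" using Pnz \<open>P = [:coeff P 0:]\<close> by (metis pCons_0_0)
    ultimately show False using P\<omega> by simp
  qed
  have degW: "degree W < t"
    using degree_mult_eq[OF Pnz Wnz] PW degree_xt[OF tpos] degP by simp
  have W1: "evq W 1 = 0" unfolding W_def evq_mult by (simp add: evq_lin)
  have rows: "Dmat \<zeta> t N s m i = 0" if m: "m < t" and W0: "evq W (\<zeta>^m) \<noteq> 0" and i: "i \<in> {1..R}" for m i
  proof -
    have "evq P (\<zeta>^m) * evq W (\<zeta>^m) = evq (monom 1 t - 1) (\<zeta>^m)"
      unfolding PW[symmetric] evq_mult ..
    also have "\<dots> = 0" unfolding evq_diff evq_monom evq_const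
      by (simp add: zpow_t evq_one)
    finally have "evq P (\<zeta>^m) = 0" using W0 by simp
    moreover have "P dvd Apoly i" by (rule Pdvd) (use row i in \<open>simp add: \<omega>_def evq_Apoly\<close>)
    then obtain B where "Apoly i = P * B" by (elim dvdE)
    ultimately show ?thesis using evq_Apoly[of i m] by (simp add: evq_mult)
  qed
  obtain D g where D: "D > 0" and g: "\<And>u. u < t \<Longrightarrow> (of_int (g u) :: rat) = of_int D * coeff W u"
    using int_scale[of t "\<lambda>u. coeff W u"] by blast
  define n where "n j = g (rho j)" for j
  have gc: "(of_int (g u) :: complex) = of_int D * of_rat (coeff W u)" if "u < t" for u
  proof -
    have "(of_int (g u) :: complex) = of_rat (of_int (g u))" by simp
    also have "\<dots> = of_int D * of_rat (coeff W u)" using g[OF that] by (simp add: of_rat_mult)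
    finally show ?thesis .
  qed
  have Nh: "Nhat n m = of_int D * evq W (\<zeta>^m)" for m
  proof -
    have "Nhat n m = (\<Sum>j<t. of_int (g (rho j)) * inverse \<zeta> ^ (m * j))"
      unfolding Nhat_def n_def ..
    also have "\<dots> = (\<Sum>u<t. of_int (g (rho (rho u))) * inverse \<zeta> ^ (m * rho u))"
      by (rule sum.reindex_bij_betw[OF rho_bij, symmetric])
    also have "\<dots> = (\<Sum>u<t. of_int D * (of_rat (coeff W u) * (\<zeta>^m) ^ u))"
    proof (rule sum.cong[OF refl])
      fix u assume u: "u \<in> {..<t}"
      have "(\<zeta>^m)^u = \<zeta>^(m*u)" by (simp only: power_mult)
      then show "of_int (g (rho (rho u))) * inverse \<zeta> ^ (m * rho u) = of_int D * (of_rat (coeff W u) * (\<zeta>^m) ^ u)"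
        using u by (simp add: rho_rho rho_pow gc)
    qed
    also have "\<dots> = of_int D * evq W (\<zeta>^m)"
      by (simp add: evq_altdef[OF degW] sum_distrib_left)
    finally show ?thesis .
  qed
  have E: "\<forall>l<t. \<forall>i\<in>{1..R}. Ecorr n i l = 0"
  proof (intro allI impI ballI)
    fix l i assume l: "l < t" and i: "i \<in> {1..R}"
    have "\<forall>m<t. Nhat n m * Dmat \<zeta> t N s m i = 0"
      using rows[OF _ _ i] Nh by fastforce
    then show "Ecorr n i l = 0" using corr_bwd l by blast
  qed
  have S: "(\<Sum>j<t. n j) = 0"
  proof -
    have "(of_int (\<Sum>j<t. n j) :: complex) = Nhat n 0" by (simp add: Nhat_0)
    also have "\<dots> = 0" using Nh[of 0] W1 by simp
    finally have "(of_int (\<Sum>j<t. n j) :: complex) = 0" .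
    then show ?thesis by (simp only: of_int_eq_0_iff)
  qed
  have nz: "\<exists>j<t. n j \<noteq> 0"
  proof -
    define u where "u = degree W"
    have u: "u < t" using degW u_def by simp
    have "coeff W u \<noteq> 0" using Wnz u_def by simp
    then have "g u \<noteq> 0" using g[OF u] D by auto
    then have "n (rho u) \<noteq> 0" unfolding n_def using rho_rho[OF u] by simp
    then show ?thesis using rho_lt[OF u] by blast
  qed
  show ?thesis using nz S E by blast
qed

lemma exist_n0:
  assumes row: "\<forall>i\<in>{1..R}. Dmat \<zeta> t N s 0 i = 0"
  shows "\<exists>n. (\<exists>j<t. n j \<noteq> 0) \<and> (\<forall>l<t. \<forall>i\<in>{1..R}. Ecorr n i l = 0)"
proof -
  define n :: "nat \<Rightarrow> int" where "n j = 1" for j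
  have Nh: "Nhat n m = 0" if "0 < m" "m < t" for m
  proof -
    have "Nhat n m = (\<Sum>j<t. (inverse \<zeta> ^ m) ^ j)"
      unfolding Nhat_def n_def by (simp only: power_mult of_int_1 mult_1_left)
    also have "\<dots> = 0"
    proof (rule geo_sum)
      show "(inverse \<zeta> ^ m) ^ t = 1"
        by (simp add: power_inverse zpow_t)
      show "inverse \<zeta> ^ m \<noteq> 1" using z1[of m] that by (simp add: power_inverse)
    qed
    finally show ?thesis .
  qed
  have "\<forall>l<t. \<forall>i\<in>{1..R}. Ecorr n i l = 0"
  proof (intro allI impI ballI)
    fix l i assume l: "l < t" and i: "i \<in> {1..R}"
    have "\<forall>m<t. Nhat n m * Dmat \<zeta> t N s m i = 0"
      using Nh row i by (metis mult_zero_left mult_zero_right neq0_conv)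
    then show "Ecorr n i l = 0" using corr_bwd l by blast
  qed
  moreover have "n 0 \<noteq> 0" unfolding n_def by simp
  ultimately show ?thesis using tpos by blast
qed

end

lemma prod_powi:
  fixes x :: complex
  assumes "x \<noteq> 0"
  shows "(\<Prod>j\<in>A. x powi f j) = x powi (\<Sum>j\<in>A. f j)"
  by (induct A rule: infinite_finite_induct) (simp_all add: power_int_add assms)

lemma root_from_powi:
  assumes "lam powi m = 1" "m \<noteq> 0"
  shows "root_of_unity lam"
proof (cases "m > 0")
  case True
  then have "lam ^ nat m = 1" using assms by (simp add: power_int_def)
  then show ?thesis unfolding root_of_unity_def using True by (intro exI[of _ "nat m"]) simp
next
  case False
  then have "inverse lam ^ nat (-m) = 1" using assms by (simp add: power_int_def)
  then have "lam ^ nat (-m) = 1" by (simp add: power_inverse)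
  then show ?thesis unfolding root_of_unity_def using False assms by (intro exI[of _ "nat (-m)"]) simp
qed

context thm7
begin

lemma has_sol_iff:
  "has_solution q \<zeta> t A \<longleftrightarrow> (\<exists>n. (\<exists>j<t. n j \<noteq> 0) \<and> T * (\<Sum>j<t. n j) = 0 \<and>
     (\<forall>l<t. \<forall>i\<in>{1..R}. Ecorr n i l = 0) \<and> (\<exists>N'. lcF (phi \<zeta> t n A) = q powi N'))"
proof
  assume "has_solution q \<zeta> t A"
  then obtain b n where bn: "b \<noteq> 0" "\<exists>j<t. n j \<noteq> 0" "phi \<zeta> t n A = subst_scale q b / b"
    unfolding has_solution_def by blast
  have H: "Hs q (phi \<zeta> t n A)" unfolding Hs_def using bn by blast
  have "\<forall>\<gamma>. vF (orb q \<gamma>) (phi \<zeta> t n A) = 0" using Hs_necessary(1)[OF qnz H] by blast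
  then have "T * (\<Sum>j<t. n j) = 0 \<and> (\<forall>l<t. \<forall>i\<in>{1..R}. Ecorr n i l = 0)" using orb_cond_iff by blast
  then show "\<exists>n. (\<exists>j<t. n j \<noteq> 0) \<and> T * (\<Sum>j<t. n j) = 0 \<and>
     (\<forall>l<t. \<forall>i\<in>{1..R}. Ecorr n i l = 0) \<and> (\<exists>N'. lcF (phi \<zeta> t n A) = q powi N')"
    using bn(2) Hs_necessary(2)[OF qnz H] by blast
next
  assume "\<exists>n. (\<exists>j<t. n j \<noteq> 0) \<and> T * (\<Sum>j<t. n j) = 0 \<and>
     (\<forall>l<t. \<forall>i\<in>{1..R}. Ecorr n i l = 0) \<and> (\<exists>N'. lcF (phi \<zeta> t n A) = q powi N')"
  then obtain n N' where n: "\<exists>j<t. n j \<noteq> 0" "T * (\<Sum>j<t. n j) = 0"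
     "\<forall>l<t. \<forall>i\<in>{1..R}. Ecorr n i l = 0" "lcF (phi \<zeta> t n A) = q powi N'" by blast
  have "\<forall>\<gamma>. vF (orb q \<gamma>) (phi \<zeta> t n A) = 0" using orb_cond_iff n(2,3) by blast
  then have "Hs q (phi \<zeta> t n A)" by (rule Hs_sufficient[OF qnz phi_nz[OF znz A_nz] _ n(4)])
  then show "has_solution q \<zeta> t A" unfolding Hs_def has_solution_def using n(1) by blast
qed

abbreviation "DA \<equiv> degF A"

lemma lcF_phiA: "lcF (phi \<zeta> t n A) = lam powi (\<Sum>j<t. n j) * \<zeta> powi (DA * (\<Sum>j<t. int j * n j))"
proof -
  have f: "((\<zeta>^j) powi DA * lam) powi n j = \<zeta> powi (DA * (int j * n j)) * lam powi n j" for j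
  proof -
    have "((\<zeta>^j) powi DA) powi n j = \<zeta> powi (DA * (int j * n j))"
      by (simp add: power_int_power power_int_mult[symmetric] mult_ac)
    then show ?thesis by (simp add: power_int_mult_distrib)
  qed
  have "lcF (phi \<zeta> t n A) = (\<Prod>j<t. ((\<zeta>^j) powi DA * lam) powi n j)"
    using lcF_phi[OF znz A_nz] lcF_A by simp
  also have "\<dots> = (\<Prod>j<t. \<zeta> powi (DA * (int j * n j))) * (\<Prod>j<t. lam powi n j)"
    by (simp add: f prod.distrib)
  also have "\<dots> = \<zeta> powi (\<Sum>j<t. DA * (int j * n j)) * lam powi (\<Sum>j<t. n j)"
    using znz lam by (simp add: prod_powi)
  also have "\<dots> = \<zeta> powi (DA * (\<Sum>j<t. int j * n j)) * lam powi (\<Sum>j<t. n j)"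
    by (simp only: sum_distrib_left)
  finally show ?thesis by (simp only: mult.commute)
qed

lemma cpow: "(lam powi S * \<zeta> powi X) powi (m * int t) = (lam powi m) powi (S * int t)"
proof -
  have "(lam powi S * \<zeta> powi X) powi (m * int t) = lam powi (S * (m * int t)) * \<zeta> powi (X * (m * int t))"
    by (simp only: power_int_mult_distrib power_int_mult)
  also have "\<zeta> powi (X * (m * int t)) = \<zeta> powi (int t * (X * m))" by (simp add: mult_ac)
  also have "\<dots> = (\<zeta> powi int t) powi (X * m)" by (rule power_int_mult)
  also have "\<dots> = 1" by (simp add: zt)
  also have "lam powi (S * (m * int t)) = lam powi (m * (S * int t))" by (simp add: mult_ac)
  also have "\<dots> = (lam powi m) powi (S * int t)" by (rule power_int_mult)
  finally show ?thesis by simp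
qed

lemma scaled_solution:
  assumes nz: "\<exists>j<t. n j \<noteq> 0" and E: "\<forall>l<t. \<forall>i\<in>{1..R}. Ecorr n i l = 0"
    and TS: "T * (\<Sum>j<t. n j) = 0" and M: "M \<noteq> 0"
    and c: "(lam powi (\<Sum>j<t. n j) * \<zeta> powi (DA * (\<Sum>j<t. int j * n j))) powi M = q powi N'"
  shows "has_solution q \<zeta> t A"
proof -
  define n' where "n' j = M * n j" for j
  have nz': "\<exists>j<t. n' j \<noteq> 0" using nz M unfolding n'_def by auto
  have E': "\<forall>l<t. \<forall>i\<in>{1..R}. Ecorr n' i l = 0"
    using E unfolding n'_def Ecorr_def by (simp add: sum_distrib_left[symmetric] mult.assoc)
  have S': "(\<Sum>j<t. n' j) = M * (\<Sum>j<t. n j)" unfolding n'_def by (simp add: sum_distrib_left)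
  have X': "(\<Sum>j<t. int j * n' j) = M * (\<Sum>j<t. int j * n j)"
    unfolding n'_def by (simp add: sum_distrib_left mult_ac)
  have TS': "T * (\<Sum>j<t. n' j) = 0" unfolding S' using TS by (simp add: mult.left_commute)
  have "lcF (phi \<zeta> t n' A) = (lam powi (\<Sum>j<t. n j) * \<zeta> powi (DA * (\<Sum>j<t. int j * n j))) powi M"
    unfolding lcF_phiA S' X'
    by (simp add: power_int_mult_distrib power_int_mult[symmetric] mult_ac)
  then have "lcF (phi \<zeta> t n' A) = q powi N'" using c by simp
  then show ?thesis unfolding has_sol_iff using nz' TS' E' by blast
qed

lemma necessary_row:
  assumes "has_solution q \<zeta> t A"
  shows "\<exists>n N'. (\<exists>m<t. Nhat n m \<noteq> 0 \<and> (\<forall>i\<in>{1..R}. Dmat \<zeta> t N s m i = 0)) \<and>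
    T * (\<Sum>j<t. n j) = 0 \<and> lam powi (\<Sum>j<t. n j) * \<zeta> powi (DA * (\<Sum>j<t. int j * n j)) = q powi N'"
proof -
  obtain n N' where n: "\<exists>j<t. n j \<noteq> 0" "T * (\<Sum>j<t. n j) = 0"
     "\<forall>l<t. \<forall>i\<in>{1..R}. Ecorr n i l = 0" "lcF (phi \<zeta> t n A) = q powi N'"
    using assms unfolding has_sol_iff by blast
  obtain m where m: "m < t" "Nhat n m \<noteq> 0" using Nhat_nz[OF n(1)] by blast
  have "\<forall>i\<in>{1..R}. Dmat \<zeta> t N s m i = 0"
    using corr_fwd n(3) m by auto
  then show ?thesis using m n(2,4) unfolding lcF_phiA by blast
qed

lemma main:
  "(T = 0 \<and> (nontriv_meet lam q \<or> root_of_unity lam) \<longrightarrow>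
           (has_solution q \<zeta> t A \<longleftrightarrow> (\<exists>k<t. \<forall>i\<in>{1..R}. Dmat \<zeta> t N s k i = 0)))
       \<and> (T \<noteq> 0 \<or> (\<not> nontriv_meet lam q \<and> \<not> root_of_unity lam) \<longrightarrow>
           (has_solution q \<zeta> t A \<longleftrightarrow>
              (\<exists>k. 0 < k \<and> k < t \<and> (\<forall>i\<in>{1..R}. Dmat \<zeta> t N s k i = 0))))"
proof (intro conjI impI iffI)
  assume "T = 0 \<and> (nontriv_meet lam q \<or> root_of_unity lam)" "has_solution q \<zeta> t A"
  then show "\<exists>k<t. \<forall>i\<in>{1..R}. Dmat \<zeta> t N s k i = 0" using necessary_row by blast
next
  assume a: "T = 0 \<and> (nontriv_meet lam q \<or> root_of_unity lam)"
    and "\<exists>k<t. \<forall>i\<in>{1..R}. Dmat \<zeta> t N s k i = 0"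
  then obtain k where k: "k < t" "\<forall>i\<in>{1..R}. Dmat \<zeta> t N s k i = 0" by blast
  obtain n where n: "\<exists>j<t. n j \<noteq> 0" "\<forall>l<t. \<forall>i\<in>{1..R}. Ecorr n i l = 0"
  proof (cases "k = 0")
    case True then show ?thesis using exist_n0 k that by blast
  next
    case False then show ?thesis using exist_n k that by blast
  qed
  define S where "S = (\<Sum>j<t. n j)"
  define X where "X = DA * (\<Sum>j<t. int j * n j)"
  obtain m N' where mN: "m \<noteq> 0" "(lam powi m) powi (S * int t) = q powi N'"
  proof (cases "root_of_unity lam")
    case True
    then obtain p :: nat where p: "p > 0" "lam ^ p = 1" unfolding root_of_unity_def by blast
    have "(lam powi int p) powi (S * int t) = q powi 0" using p by simp
    then show ?thesis using that p by (metis of_nat_0_less_iff less_irrefl)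
  next
    case False
    then obtain m e where me: "lam powi m = q powi e" "lam powi m \<noteq> 1"
      using a unfolding nontriv_meet_def by blast
    have "m \<noteq> 0" using me(2) by auto
    moreover have "(lam powi m) powi (S * int t) = q powi (e * (S * int t))"
      using me(1) by (simp add: power_int_mult)
    ultimately show ?thesis using that by blast
  qed
  have "(lam powi S * \<zeta> powi X) powi (m * int t) = q powi N'" using cpow mN(2) by simp
  moreover have "m * int t \<noteq> 0" using mN(1) tpos by simp
  moreover have "T * S = 0" using a by simp
  ultimately show "has_solution q \<zeta> t A"
    using scaled_solution[OF n(1) n(2)] unfolding S_def X_def by blast
next
  assume a: "T \<noteq> 0 \<or> (\<not> nontriv_meet lam q \<and> \<not> root_of_unity lam)" and hs: "has_solution q \<zeta> t A"
  obtain n N' m where m: "m < t" "Nhat n m \<noteq> 0" "\<forall>i\<in>{1..R}. Dmat \<zeta> t N s m i = 0"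
    and TS: "T * (\<Sum>j<t. n j) = 0"
    and c: "lam powi (\<Sum>j<t. n j) * \<zeta> powi (DA * (\<Sum>j<t. int j * n j)) = q powi N'"
    using necessary_row[OF hs] by blast
  have S0: "(\<Sum>j<t. n j) = 0"
  proof (rule ccontr)
    assume S: "(\<Sum>j<t. n j) \<noteq> 0"
    then have gen: "\<not> nontriv_meet lam q \<and> \<not> root_of_unity lam" using a TS by auto
    define S' where "S' = (\<Sum>j<t. n j) * int t"
    have S'nz: "S' \<noteq> 0" unfolding S'_def using S tpos by simp
    have "lam powi S' = q powi (N' * int t)"
    proof -
      have "lam powi S' = (lam powi (\<Sum>j<t. n j) * \<zeta> powi (DA * (\<Sum>j<t. int j * n j))) powi (1 * int t)"
      proof -
        have cp: "(lam powi (\<Sum>j<t. n j) * \<zeta> powi (DA * (\<Sum>j<t. int j * n j))) powi (1 * int t)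
           = (lam powi 1) powi ((\<Sum>j<t. n j) * int t)" by (rule cpow)
        show ?thesis unfolding S'_def cp by (simp only: power_int_1_right)
      qed
      also have "\<dots> = q powi (N' * int t)" unfolding c by (simp add: power_int_mult)
      finally show ?thesis .
    qed
    then show False
      using gen root_from_powi[OF _ S'nz] unfolding nontriv_meet_def by metis
  qed
  have "m \<noteq> 0"
  proof
    assume "m = 0"
    then have "Nhat n m = of_int (\<Sum>j<t. n j)" by (simp only: Nhat_0)
    then show False using m(2) S0 by simp
  qed
  then show "\<exists>k. 0 < k \<and> k < t \<and> (\<forall>i\<in>{1..R}. Dmat \<zeta> t N s k i = 0)" using m by blast
next
  assume "T \<noteq> 0 \<or> (\<not> nontriv_meet lam q \<and> \<not> root_of_unity lam)"
    and "\<exists>k. 0 < k \<and> k < t \<and> (\<forall>i\<in>{1..R}. Dmat \<zeta> t N s k i = 0)"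
  then obtain k where k: "0 < k" "k < t" "\<forall>i\<in>{1..R}. Dmat \<zeta> t N s k i = 0" by blast
  obtain n where n: "\<exists>j<t. n j \<noteq> 0" "(\<Sum>j<t. n j) = 0" "\<forall>l<t. \<forall>i\<in>{1..R}. Ecorr n i l = 0"
    using exist_n[OF k] by blast
  have c: "(lam powi (\<Sum>j<t. n j) * \<zeta> powi (DA * (\<Sum>j<t. int j * n j))) powi (1 * int t) = q powi 0"
    using cpow[of "\<Sum>j<t. n j" "DA * (\<Sum>j<t. int j * n j)" 1] n(2) by simp
  have TS: "T * (\<Sum>j<t. n j) = 0" using n(2) by simp
  have M: "1 * int t \<noteq> 0" using tpos by simp
  show "has_solution q \<zeta> t A" by (rule scaled_solution[OF n(1) n(3) TS M c])
qed

end

theorem theorem7: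
  fixes q \<zeta> lam :: complex and t R :: nat and T N :: int
    and r :: "nat \<Rightarrow> complex" and s :: "nat \<Rightarrow> int \<Rightarrow> nat \<Rightarrow> int"
  assumes "norm q > 1"
    and "t \<ge> 2"
    and "primitive_root_of_unity t \<zeta>"
    and "lam \<noteq> 0"
    and "\<forall>i\<in>{1..R}. r i \<noteq> 0"
    and "\<forall>i\<in>{1..R}. \<forall>j\<in>{1..R}. i \<noteq> j \<longrightarrow>
           \<not> (\<exists>m n :: int. r i = \<zeta> powi m * q powi n * r j)"
  shows "(T = 0 \<and> (nontriv_meet lam q \<or> root_of_unity lam) \<longrightarrow>
           (has_solution q \<zeta> t (a_rf q \<zeta> t lam T N R r s) \<longleftrightarrow>
              (\<exists>k<t. \<forall>i\<in>{1..R}. Dmat \<zeta> t N s k i = 0)))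
       \<and> (T \<noteq> 0 \<or> (\<not> nontriv_meet lam q \<and> \<not> root_of_unity lam) \<longrightarrow>
           (has_solution q \<zeta> t (a_rf q \<zeta> t lam T N R r s) \<longleftrightarrow>
              (\<exists>k. 0 < k \<and> k < t \<and> (\<forall>i\<in>{1..R}. Dmat \<zeta> t N s k i = 0))))"
proof -
  interpret thm7 q \<zeta> lam t R T N r s
    using assms by unfold_locales
  show ?thesis by (rule main)
qed

end
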